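(* Let $\mu^\pm$ be compactly supported probability measures on $\mathbb{R}^d$ and $c(x,y)=\frac12|x-y|^2$. Assume Brenier's optimal transport map $T=\nabla f$ from $\mu^-$ to $\mu^+$ is $M$-Lipschitz. Let $\gamma_\varepsilon$ be the optimal entropic plan. Then, as $\varepsilon\to0$, \[\int_{\mathbb{R}^d\times\mathbb{R}^d}|y-T(x)|^2\,\mathrm{d}\gamma_\varepsilon(x,y)\le M\big(d\varepsilon\log(1/\varepsilon)+O(\varepsilon)\big).\] In particular, if $T_\varepsilon$ denotes the barycentric projection of $\gamma_\varepsilon$ (i.e. $T_\varepsilon(x)$ is the conditional expectation of $Y$ given $X=x$ when $(X,Y)\sim\gamma_\varepsilon$), then \[\|T_\varepsilon-T\|^2_{L^2(\mu^-)}\le M\big(d\varepsilon\log(1/\varepsilon)+O(\varepsilon)\big).\]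
   Context: Let $\Pi(\mu^-,\mu^+)$ be the set of couplings of $\mu^-,\mu^+$ and $\mathrm{Ent}(p\,|\,q)=\int\rho\log\rho\,\mathrm{d}q$ if $p=\rho q$, $+\infty$ otherwise. The optimal entropic plan $\gamma_\varepsilon$ is the unique minimizer over $\gamma\in\Pi(\mu^-,\mu^+)$ of $\frac12\int|x-y|^2\,\mathrm{d}\gamma+\varepsilon\,\mathrm{Ent}(\gamma\,|\,\mu^-\otimes\mu^+)$. Brenier's map: there is a convex lsc function $f$ on $\mathbb{R}^d$ such that $\gamma\in\Pi(\mu^-,\mu^+)$ minimizes $\int|x-y|^2\,\mathrm{d}\gamma$ iff $\operatorname{spt}\gamma\subseteq\{(x,y):y\in\partial f(x)\}$; the hypothesis is that $f$ is differentiable with $\nabla f$ $M$-Lipschitz and $(\mathrm{id},\nabla f)_\#\mu^-$ is the optimal plan, and $T=\nabla f$. *)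

theory Defs
  imports "HOL-Probability.Probability"
begin

definition compactly_supported_prob :: "'a::euclidean_space measure \<Rightarrow> bool" where
  "compactly_supported_prob \<mu> \<longleftrightarrow>
     sets \<mu> = sets borel \<and> prob_space \<mu> \<and> (\<exists>K. compact K \<and> (AE x in \<mu>. x \<in> K))"

definition coupling :: "'a measure \<Rightarrow> 'b measure \<Rightarrow> ('a \<times> 'b) measure \<Rightarrow> bool" where
  "coupling \<mu> \<nu> \<gamma> \<longleftrightarrow>
     sets \<gamma> = sets (\<mu> \<Otimes>\<^sub>M \<nu>) \<and> distr \<gamma> \<mu> fst = \<mu> \<and> distr \<gamma> \<nu> snd = \<nu>"

text \<open>The integral is split into positive and negative parts (the negative part is finite
  for finite q, since rho log rho >= -1/e).\<close>
definition rel_ent :: "'b measure \<Rightarrow> 'b measure \<Rightarrow> ereal" where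
  "rel_ent p q =
    (if \<exists>\<rho>\<in>borel_measurable q. (\<forall>x. 0 \<le> \<rho> x) \<and> p = density q (\<lambda>x. ennreal (\<rho> x)) then
       (let \<rho> = (SOME \<rho>. \<rho> \<in> borel_measurable q \<and> (\<forall>x. 0 \<le> \<rho> x) \<and>
                          p = density q (\<lambda>x. ennreal (\<rho> x)))
        in enn2ereal (\<integral>\<^sup>+ x. ennreal (\<rho> x * ln (\<rho> x)) \<partial>q)
           - enn2ereal (\<integral>\<^sup>+ x. ennreal (- (\<rho> x * ln (\<rho> x))) \<partial>q))
     else \<infinity>)"

definition quad_cost :: "'a::euclidean_space \<times> 'a \<Rightarrow> real" where
  "quad_cost = (\<lambda>(x, y). (1/2) * (norm (x - y))\<^sup>2)"

definition entropic_functional ::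
  "'a::euclidean_space measure \<Rightarrow> 'a measure \<Rightarrow> real \<Rightarrow> ('a \<times> 'a) measure \<Rightarrow> ereal" where
  "entropic_functional \<mu> \<nu> \<epsilon> \<gamma> =
     ereal (\<integral> z. quad_cost z \<partial>\<gamma>) + ereal \<epsilon> * rel_ent \<gamma> (\<mu> \<Otimes>\<^sub>M \<nu>)"

definition optimal_entropic_plan ::
  "'a::euclidean_space measure \<Rightarrow> 'a measure \<Rightarrow> real \<Rightarrow> ('a \<times> 'a) measure \<Rightarrow> bool" where
  "optimal_entropic_plan \<mu> \<nu> \<epsilon> \<gamma> \<longleftrightarrow>
     coupling \<mu> \<nu> \<gamma> \<and>
     (\<forall>\<gamma>'. coupling \<mu> \<nu> \<gamma>' \<longrightarrow> entropic_functional \<mu> \<nu> \<epsilon> \<gamma> \<le> entropic_functional \<mu> \<nu> \<epsilon> \<gamma>')"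

definition optimal_plan ::
  "'a::euclidean_space measure \<Rightarrow> 'a measure \<Rightarrow> ('a \<times> 'a) measure \<Rightarrow> bool" where
  "optimal_plan \<mu> \<nu> \<gamma> \<longleftrightarrow>
     coupling \<mu> \<nu> \<gamma> \<and>
     (\<forall>\<gamma>'. coupling \<mu> \<nu> \<gamma>' \<longrightarrow>
        (\<integral> (x, y). (norm (x - y))\<^sup>2 \<partial>\<gamma>) \<le> (\<integral> (x, y). (norm (x - y))\<^sup>2 \<partial>\<gamma>'))"

text \<open>Barycentric projection: Tb(x) = E[Y | X = x] for (X,Y) ~ gamma, i.e. Tb is a
  Borel, mu-integrable function with  int_{A x R^d} y d gamma = int_A Tb d mu  for all Borel A.\<close>
definition barycentric_projection ::
  "('a::euclidean_space \<times> 'a) measure \<Rightarrow> 'a measure \<Rightarrow> ('a \<Rightarrow> 'a) \<Rightarrow> bool" where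
  "barycentric_projection \<gamma> \<mu> Tb \<longleftrightarrow>
     Tb \<in> borel_measurable \<mu> \<and> integrable \<mu> Tb \<and>
     (\<forall>A \<in> sets \<mu>. (\<integral> (x, y). indicator A x *\<^sub>R y \<partial>\<gamma>) = (\<integral> x. indicator A x *\<^sub>R Tb x \<partial>\<mu>))"

end

theory Submission
  imports Defs
begin

lemma grad_ineq:
  fixes f :: "'a::euclidean_space \<Rightarrow> real"
  assumes cvx: "convex_on UNIV f" and der: "\<And>x. (f has_derivative (\<lambda>h. T x \<bullet> h)) (at x)"
  shows "f x + T x \<bullet> (z - x) \<le> f z"
proof -
  define g where "g t = f (x + t *\<^sub>R (z - x))" for t :: real
  have cg: "convex_on UNIV g"
  proof (rule convex_onI)
    fix s t u :: real assume ab: "0 < s" "s < 1"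
    have "x + ((1 - s) * t + s * u) *\<^sub>R (z - x) = (1 - s) *\<^sub>R (x + t *\<^sub>R (z - x)) + s *\<^sub>R (x + u *\<^sub>R (z - x))"
      by (simp add: algebra_simps)
    then show "g ((1 - s) *\<^sub>R t + s *\<^sub>R u) \<le> (1 - s) * g t + s * g u"
      using convex_onD[OF cvx, of s "x + t *\<^sub>R (z - x)" "x + u *\<^sub>R (z - x)"] ab by (simp add: g_def)
  qed simp
  have "((\<lambda>t. x + t *\<^sub>R (z - x)) has_derivative (\<lambda>t. t *\<^sub>R (z - x))) (at 0)"
    by (auto intro!: derivative_eq_intros)
  from has_derivative_compose[OF this der[of "x + 0 *\<^sub>R (z - x)"]]
  have "(g has_derivative (\<lambda>t. T x \<bullet> (t *\<^sub>R (z - x)))) (at 0)"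
    unfolding g_def o_def by simp
  moreover have "(\<lambda>t. T x \<bullet> (t *\<^sub>R (z - x))) = (*) (T x \<bullet> (z - x))" by (auto simp: fun_eq_iff)
  ultimately have "(g has_field_derivative (T x \<bullet> (z - x))) (at 0)"
    by (simp add: has_field_derivative_def)
  from convex_on_imp_above_tangent[OF cg _ _ _ , of 0 1 "T x \<bullet> (z - x)"] this
  have "g 1 - g 0 \<ge> T x \<bullet> (z - x) * (1 - 0)" by simp
  then show ?thesis by (simp add: g_def)
qed

lemma descent:
  fixes f :: "'a::euclidean_space \<Rightarrow> real"
  assumes der: "\<And>x. (f has_derivative (\<lambda>h. T x \<bullet> h)) (at x)"
    and lip: "M-lipschitz_on UNIV T"
  shows "f z \<le> f x + T x \<bullet> (z - x) + M / 2 * (norm (z - x))\<^sup>2"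
proof -
  define d where "d = z - x"
  define h where "h t = f (x + t *\<^sub>R d) - t * (T x \<bullet> d) - M / 2 * t\<^sup>2 * (norm d)\<^sup>2" for t :: real
  have "h 1 \<le> h 0"
  proof (rule DERIV_nonpos_imp_nonincreasing[of 0 1 h])
    fix t :: real assume t: "0 \<le> t" "t \<le> 1"
    have "((\<lambda>t. x + t *\<^sub>R d) has_derivative (\<lambda>s. s *\<^sub>R d)) (at t)"
      by (auto intro!: derivative_eq_intros)
    from has_derivative_compose[OF this der[of "x + t *\<^sub>R d"]]
    have d1: "((\<lambda>t. f (x + t *\<^sub>R d)) has_derivative (\<lambda>s. T (x + t *\<^sub>R d) \<bullet> (s *\<^sub>R d))) (at t)"
      unfolding o_def by simp
    have "(\<lambda>s. T (x + t *\<^sub>R d) \<bullet> (s *\<^sub>R d)) = (*) (T (x + t *\<^sub>R d) \<bullet> d)" by (auto simp: fun_eq_iff)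
    with d1 have d2: "((\<lambda>t. f (x + t *\<^sub>R d)) has_real_derivative (T (x + t *\<^sub>R d) \<bullet> d)) (at t)"
      by (simp add: has_field_derivative_def)
    have "(h has_real_derivative (T (x + t *\<^sub>R d) \<bullet> d - T x \<bullet> d - M / 2 * (2 * t) * (norm d)\<^sup>2)) (at t)"
      unfolding h_def
      by (rule derivative_eq_intros d2 refl | simp)+
    moreover have "T (x + t *\<^sub>R d) \<bullet> d - T x \<bullet> d - M / 2 * (2 * t) * (norm d)\<^sup>2 \<le> 0"
    proof -
      have "T (x + t *\<^sub>R d) \<bullet> d - T x \<bullet> d = (T (x + t *\<^sub>R d) - T x) \<bullet> d" by (simp add: inner_diff_left)
      also have "\<dots> \<le> norm (T (x + t *\<^sub>R d) - T x) * norm d" by (rule norm_cauchy_schwarz)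
      also have "norm (T (x + t *\<^sub>R d) - T x) \<le> M * norm (t *\<^sub>R d)"
        using lipschitz_onD[OF lip, of "x + t *\<^sub>R d" x] by (simp add: dist_norm)
      hence "norm (T (x + t *\<^sub>R d) - T x) * norm d \<le> M * norm (t *\<^sub>R d) * norm d"
        by (rule mult_right_mono) simp
      also have "\<dots> = M * t * (norm d)\<^sup>2" using t by (simp add: power2_eq_square)
      finally show ?thesis by (simp add: algebra_simps)
    qed
    ultimately show "\<exists>y. (h has_real_derivative y) (at t) \<and> y \<le> 0" by blast
  qed simp
  then show ?thesis by (simp add: h_def d_def algebra_simps)
qed

lemma cocoercive:
  fixes f :: "'a::euclidean_space \<Rightarrow> real"
  assumes cvx: "convex_on UNIV f" and der: "\<And>x. (f has_derivative (\<lambda>h. T x \<bullet> h)) (at x)"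
    and lip: "M-lipschitz_on UNIV T"
  shows "(norm (T z - T x))\<^sup>2 \<le> 2 * M * (f z - f x - T x \<bullet> (z - x))"
proof (cases "M = 0")
  case True
  then have "T z = T x" using lipschitz_onD[OF lip, of z x] by simp
  then show ?thesis using grad_ineq[OF cvx der, of x z] True by simp
next
  case False
  then have M: "M > 0" using lipschitz_on_nonneg[OF lip] by simp
  define g where "g = T z - T x"
  define w where "w = z - (1 / M) *\<^sub>R g"
  have a: "f x + T x \<bullet> (w - x) \<le> f w" by (rule grad_ineq[OF cvx der])
  have b: "f w \<le> f z + T z \<bullet> (w - z) + M / 2 * (norm (w - z))\<^sup>2" by (rule descent[OF der lip])
  have e1: "T x \<bullet> (w - x) = T x \<bullet> (z - x) - (1/M) * (T x \<bullet> g)"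
    by (simp add: w_def inner_diff_right algebra_simps)
  have e2: "T z \<bullet> (w - z) = - (1/M) * (T z \<bullet> g)"
    by (simp add: w_def inner_diff_right algebra_simps)
  have e3: "M / 2 * (norm (w - z))\<^sup>2 = (1 / (2 * M)) * (g \<bullet> g)"
    using M by (simp add: w_def power2_eq_square field_simps) (metis power2_eq_square power2_norm_eq_inner)
  have e4: "T z \<bullet> g - T x \<bullet> g = g \<bullet> g" by (simp add: g_def inner_diff_left)
  from a b e1 e2 e3 have "f z - f x - T x \<bullet> (z - x) \<ge> (1/M) * (T z \<bullet> g - T x \<bullet> g) - (1 / (2 * M)) * (g \<bullet> g)"
    by (simp add: algebra_simps)
  with e4 have "f z - f x - T x \<bullet> (z - x) \<ge> (1 / (2 * M)) * (g \<bullet> g)"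
    using M by (simp add: field_simps)
  then show ?thesis using M by (simp add: g_def power2_norm_eq_inner field_simps)
qed


lemma qc_expand: "quad_cost (x, y) = (norm x)\<^sup>2 / 2 + (norm y)\<^sup>2 / 2 - x \<bullet> y"
  by (simp add: quad_cost_def power2_norm_eq_inner inner_diff_left inner_diff_right inner_commute algebra_simps)

lemma cont_bound:
  fixes g :: "'z::topological_space \<Rightarrow> 'b::real_normed_vector"
  assumes "compact S" "continuous_on S g"
  shows "\<exists>B. \<forall>x\<in>S. norm (g x) \<le> B"
  using compact_imp_bounded[OF compact_continuous_image[OF assms(2,1)]]
  by (auto simp: bounded_iff)

lemma integrable_bounded_on:
  fixes g :: "'b \<Rightarrow> 'c::{banach,second_countable_topology}"
  assumes "finite_measure N" "g \<in> borel_measurable N" "AE x in N. x \<in> S" "\<forall>x\<in>S. norm (g x) \<le> B"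
  shows "integrable N g"
proof -
  interpret finite_measure N by fact
  show ?thesis
  proof (rule integrable_const_bound[of _ B])
    show "AE x in N. norm (g x) \<le> B" using assms(3) by eventually_elim (use assms(4) in auto)
  qed (fact assms(2))
qed

locale ot_setting =
  fixes \<mu> \<nu> :: "'a::euclidean_space measure" and f :: "'a \<Rightarrow> real" and T :: "'a \<Rightarrow> 'a"
    and M :: real and K :: "'a set"
  assumes sets_mu: "sets \<mu> = sets borel" and sets_nu: "sets \<nu> = sets borel"
    and prob_mu: "prob_space \<mu>" and prob_nu: "prob_space \<nu>"
    and K: "compact K" and AE_K: "AE x in \<mu>. x \<in> K"
    and cvx: "convex_on UNIV f" and der: "\<And>x. (f has_derivative (\<lambda>h. T x \<bullet> h)) (at x)"
    and lip: "M-lipschitz_on UNIV T"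
    and nu_eq: "\<nu> = distr \<mu> \<nu> T"
begin

lemma M_nonneg: "0 \<le> M" using lipschitz_on_nonneg[OF lip] .

lemma cont_f: "continuous_on UNIV f"
  by (meson continuous_at_imp_continuous_on der has_derivative_continuous)

lemma cont_T: "continuous_on UNIV T"
  using lip by (rule lipschitz_on_continuous_on)

lemma T_meas[measurable]: "T \<in> borel_measurable borel"
  using cont_T by (simp add: borel_measurable_continuous_onI)

lemma f_meas[measurable]: "f \<in> borel_measurable borel"
  using cont_f by (simp add: borel_measurable_continuous_onI)

definition D :: "'a set" where
  "D = (SOME D. countable D \<and> (\<forall>X. open X \<longrightarrow> X \<noteq> {} \<longrightarrow> (\<exists>d\<in>D. d \<in> X)))"

lemma D_ex: "\<exists>D::'a set. countable D \<and> (\<forall>X. open X \<longrightarrow> X \<noteq> {} \<longrightarrow> (\<exists>d\<in>D. d \<in> X))"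
proof -
  obtain D :: "'a set" where "countable D" "\<And>X. open X \<Longrightarrow> X \<noteq> {} \<Longrightarrow> \<exists>d\<in>D. d \<in> X"
    by (rule countable_dense_setE) blast
  then show ?thesis by blast
qed

lemma D: "countable D" "open X \<Longrightarrow> X \<noteq> {} \<Longrightarrow> \<exists>d\<in>D. d \<in> X"
  using someI_ex[OF D_ex] unfolding D_def[symmetric] by auto

definition fs :: "'a \<Rightarrow> ereal" where "fs y = (SUP z\<in>D. ereal (z \<bullet> y - f z))"
definition phi :: "'a \<Rightarrow> real" where "phi x = (norm x)\<^sup>2 / 2 - f x"
definition psi :: "'a \<Rightarrow> real" where "psi y = (norm y)\<^sup>2 / 2 - real_of_ereal (fs y)"

lemma fs_meas[measurable]: "fs \<in> borel_measurable borel"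
  unfolding fs_def
  by (rule borel_measurable_SUP[OF D(1)]) (auto intro!: borel_measurable_continuous_onI continuous_intros)

lemma phi_meas[measurable]: "phi \<in> borel_measurable borel"
  unfolding phi_def by measurable

lemma psi_meas[measurable]: "psi \<in> borel_measurable borel"
  unfolding psi_def by measurable

lemma fs_ge: "ereal (z \<bullet> y - f z) \<le> fs y"
proof (rule ccontr)
  assume "\<not> ?thesis"
  then have lt: "fs y < ereal (z \<bullet> y - f z)" by simp
  have "open {z. (\<lambda>_. fs y) z < ereal (z \<bullet> y - f z)}"
    by (rule open_Collect_less) (auto intro!: continuous_intros cont_f continuous_on_ereal)
  moreover have "z \<in> {z. fs y < ereal (z \<bullet> y - f z)}" using lt by simp
  ultimately obtain d where d: "d \<in> D" "fs y < ereal (d \<bullet> y - f d)"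
    using D(2)[of "{z. fs y < ereal (z \<bullet> y - f z)}"] by auto
  have "ereal (d \<bullet> y - f d) \<le> fs y" unfolding fs_def using d(1) by (rule SUP_upper)
  with d(2) show False by simp
qed

lemma fs_T: "fs (T x) = ereal (x \<bullet> T x - f x)"
proof (rule antisym)
  show "fs (T x) \<le> ereal (x \<bullet> T x - f x)"
    unfolding fs_def
  proof (rule SUP_least)
    fix z assume "z \<in> D"
    have "f x + T x \<bullet> (z - x) \<le> f z" by (rule grad_ineq[OF cvx der])
    then show "ereal (z \<bullet> T x - f z) \<le> ereal (x \<bullet> T x - f x)"
      by (simp add: inner_diff_right inner_commute)
  qed
  show "ereal (x \<bullet> T x - f x) \<le> fs (T x)" by (rule fs_ge)
qed

lemma psi_T: "psi (T x) = (norm (T x))\<^sup>2 / 2 - x \<bullet> T x + f x"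
  by (simp add: psi_def fs_T)

lemma key1: "(norm (T x' - T x))\<^sup>2 \<le> 2 * M * (quad_cost (x, T x') - phi x - psi (T x'))"
proof -
  have "quad_cost (x, T x') - phi x - psi (T x') = f x - f x' - T x' \<bullet> (x - x')"
    by (simp add: qc_expand psi_T phi_def inner_diff_right inner_commute[of "T x'"])
  moreover have "(norm (T x - T x'))\<^sup>2 \<le> 2 * M * (f x - f x' - T x' \<bullet> (x - x'))"
    by (rule cocoercive[OF cvx der lip])
  ultimately show ?thesis by (simp add: norm_minus_commute)
qed

lemma key_eq: "quad_cost (x, T x) = phi x + psi (T x)"
  by (simp add: qc_expand psi_T phi_def)

lemma key2: "quad_cost (x, T x') + phi x' \<le> quad_cost (x', T x') + phi x + M / 2 * (norm (x - x'))\<^sup>2"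
proof -
  have "f x \<le> f x' + T x' \<bullet> (x - x') + M / 2 * (norm (x - x'))\<^sup>2"
    by (rule descent[OF der lip])
  then show ?thesis
    by (simp add: qc_expand phi_def inner_diff_right inner_commute[of "T x'"] algebra_simps)
qed


lemma fin_mu: "finite_measure \<mu>" using prob_mu unfolding prob_space_def by simp
lemma fin_nu: "finite_measure \<nu>" using prob_nu unfolding prob_space_def by simp

lemma sets_mu'[measurable_cong]: "sets \<mu> = sets borel" by (rule sets_mu)
lemma sets_nu'[measurable_cong]: "sets \<nu> = sets borel" by (rule sets_nu)

lemma space_mu: "space \<mu> = UNIV" using sets_eq_imp_space_eq[OF sets_mu] by simp
lemma space_nu: "space \<nu> = UNIV" using sets_eq_imp_space_eq[OF sets_nu] by simp

lemma T_meas_mu_nu[measurable]: "T \<in> measurable \<mu> \<nu>"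
  by (simp add: measurable_cong_sets[OF sets_mu sets_nu])

lemma TK: "compact (T ` K)"
  by (rule compact_continuous_image[OF continuous_on_subset[OF cont_T] K]) simp

lemma AE_nu: "AE y in \<nu>. y \<in> T ` K"
proof -
  have "{y \<in> space \<nu>. y \<in> T ` K} \<in> sets \<nu>"
    using compact_imp_closed[OF TK] by (simp add: sets_nu space_nu borel_closed)
  then have "(AE y in distr \<mu> \<nu> T. y \<in> T ` K) \<longleftrightarrow> (AE x in \<mu>. T x \<in> T ` K)"
    by (intro AE_distr_iff) auto
  moreover have "AE x in \<mu>. T x \<in> T ` K" using AE_K by eventually_elim auto
  ultimately show ?thesis by (metis nu_eq)
qed

lemma psi_bound: "\<exists>B. \<forall>y\<in>T ` K. norm (psi y) \<le> B"
proof -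
  have "continuous_on K (\<lambda>x. (norm (T x))\<^sup>2 / 2 - x \<bullet> T x + f x)"
    by (auto intro!: continuous_intros continuous_on_subset[OF cont_T] continuous_on_subset[OF cont_f])
  from cont_bound[OF K this] obtain B where "\<forall>x\<in>K. norm ((norm (T x))\<^sup>2 / 2 - x \<bullet> T x + f x) \<le> B" ..
  then show ?thesis by (auto simp: psi_T)
qed

lemma phi_bound: "\<exists>B. \<forall>x\<in>K. norm (phi x) \<le> B"
  unfolding phi_def
  by (rule cont_bound[OF K]) (auto intro!: continuous_intros continuous_on_subset[OF cont_f])

lemma qc_bound: "\<exists>B. \<forall>z\<in>K \<times> T ` K. norm (quad_cost z) \<le> B"
  unfolding quad_cost_def case_prod_beta
  by (rule cont_bound[OF compact_Times[OF K TK]]) (auto intro!: continuous_intros)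

lemma sq_bound: "\<exists>B. \<forall>z\<in>K \<times> T ` K. norm ((norm (snd z - T (fst z)))\<^sup>2) \<le> B"
  by (rule cont_bound[OF compact_Times[OF K TK]])
     (auto intro!: continuous_intros continuous_on_compose2[OF cont_T])

lemma integrable_mu_bounded:
  fixes g :: "'a \<Rightarrow> 'c::{banach,second_countable_topology}"
  assumes "g \<in> borel_measurable borel" "\<forall>x\<in>K. norm (g x) \<le> B"
  shows "integrable \<mu> g"
  using integrable_bounded_on[of \<mu> g K B] assms AE_K fin_mu
  by (simp add: measurable_cong_sets[OF sets_mu refl])

context
  fixes \<gamma> :: "('a \<times> 'a) measure"
  assumes cp: "coupling \<mu> \<nu> \<gamma>"
begin

lemma sets_g[measurable_cong]: "sets \<gamma> = sets (borel \<Otimes>\<^sub>M borel)"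
  using cp unfolding coupling_def
  by (simp add: sets_mu sets_nu cong: sets_pair_measure_cong)

lemma fst_meas_g[measurable]: "fst \<in> measurable \<gamma> \<mu>"
  by (simp add: measurable_cong_sets[OF sets_g sets_mu])

lemma snd_meas_g[measurable]: "snd \<in> measurable \<gamma> \<nu>"
  by (simp add: measurable_cong_sets[OF sets_g sets_nu])

lemma distr_fst: "distr \<gamma> \<mu> fst = \<mu>" using cp by (simp add: coupling_def)
lemma distr_snd: "distr \<gamma> \<nu> snd = \<nu>" using cp by (simp add: coupling_def)

lemma prob_g: "prob_space \<gamma>"
  using prob_space_distrD[OF fst_meas_g] distr_fst prob_mu by simp

lemma fin_g: "finite_measure \<gamma>"
  using prob_g unfolding prob_space_def by simp

lemma AE_g: "AE z in \<gamma>. fst z \<in> K \<and> snd z \<in> T ` K"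
proof -
  have "{x \<in> space \<mu>. x \<in> K} \<in> sets \<mu>"
    using compact_imp_closed[OF K] by (simp add: sets_mu space_mu borel_closed)
  then have "(AE x in distr \<gamma> \<mu> fst. x \<in> K) \<longleftrightarrow> (AE z in \<gamma>. fst z \<in> K)"
    by (intro AE_distr_iff) auto
  with AE_K distr_fst have 1: "AE z in \<gamma>. fst z \<in> K" by metis
  have "{y \<in> space \<nu>. y \<in> T ` K} \<in> sets \<nu>"
    using compact_imp_closed[OF TK] by (simp add: sets_nu space_nu borel_closed)
  then have "(AE y in distr \<gamma> \<nu> snd. y \<in> T ` K) \<longleftrightarrow> (AE z in \<gamma>. snd z \<in> T ` K)"
    by (intro AE_distr_iff) auto
  with AE_nu distr_snd have 2: "AE z in \<gamma>. snd z \<in> T ` K" by metis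
  from 1 2 show ?thesis by eventually_elim auto
qed

lemma AE_g': "AE z in \<gamma>. z \<in> K \<times> T ` K"
  using AE_g by eventually_elim (auto simp: mem_Times_iff)

lemma integrable_g_bounded:
  fixes g :: "'a \<times> 'a \<Rightarrow> 'c::{banach,second_countable_topology}"
  assumes "g \<in> borel_measurable (borel \<Otimes>\<^sub>M borel)" "\<forall>z\<in>K \<times> T ` K. norm (g z) \<le> B"
  shows "integrable \<gamma> g"
  using integrable_bounded_on[OF fin_g _ AE_g' assms(2)] assms(1)
  by (simp add: measurable_cong_sets[OF sets_g refl])

lemma integrable_qc: "integrable \<gamma> quad_cost"
proof -
  obtain B where "\<forall>z\<in>K \<times> T ` K. norm (quad_cost z) \<le> B" using qc_bound ..
  then show ?thesis
    by (rule integrable_g_bounded[rotated]) (simp add: quad_cost_def case_prod_beta)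
qed

lemma coupling_bound:
  "(\<integral>(x, y). (norm (y - T x))\<^sup>2 \<partial>\<gamma>) \<le> 2 * M * ((\<integral>z. quad_cost z \<partial>\<gamma>) - (\<integral>x. quad_cost (x, T x) \<partial>\<mu>))"
proof -
  obtain Bp where Bp: "\<forall>x\<in>K. norm (phi x) \<le> Bp" using phi_bound ..
  obtain Bq where Bq: "\<forall>y\<in>T ` K. norm (psi y) \<le> Bq" using psi_bound ..
  obtain Bs where Bs: "\<forall>z\<in>K \<times> T ` K. norm ((norm (snd z - T (fst z)))\<^sup>2) \<le> Bs" using sq_bound ..
  have ip: "integrable \<gamma> (\<lambda>z. phi (fst z))"
    by (rule integrable_g_bounded[of _ Bp]) (use Bp in auto)
  have iq: "integrable \<gamma> (\<lambda>z. psi (snd z))"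
    by (rule integrable_g_bounded[of _ Bq]) (use Bq in auto)
  have isq: "integrable \<gamma> (\<lambda>z. (norm (snd z - T (fst z)))\<^sup>2)"
    by (rule integrable_g_bounded[of _ Bs]) (use Bs in auto)
  have ipm: "integrable \<mu> phi" by (rule integrable_mu_bounded[of _ Bp]) (use Bp in auto)
  have iqm: "integrable \<mu> (\<lambda>x. psi (T x))" by (rule integrable_mu_bounded[of _ Bq]) (use Bq in auto)
  have "(\<integral>(x, y). (norm (y - T x))\<^sup>2 \<partial>\<gamma>) = (\<integral>z. (norm (snd z - T (fst z)))\<^sup>2 \<partial>\<gamma>)"
    by (intro Bochner_Integration.integral_cong) auto
  also have "\<dots> \<le> (\<integral>z. 2 * M * (quad_cost z - phi (fst z) - psi (snd z)) \<partial>\<gamma>)"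
  proof (rule integral_mono_AE[OF isq])
    show "integrable \<gamma> (\<lambda>z. 2 * M * (quad_cost z - phi (fst z) - psi (snd z)))"
      using integrable_qc ip iq by auto
    show "AE z in \<gamma>. (norm (snd z - T (fst z)))\<^sup>2 \<le> 2 * M * (quad_cost z - phi (fst z) - psi (snd z))"
      using AE_g
    proof eventually_elim
      case (elim z)
      then obtain x' where "snd z = T x'" by auto
      then show ?case using key1[of x' "fst z"] by (cases z) auto
    qed
  qed
  also have "\<dots> = 2 * M * ((\<integral>z. quad_cost z \<partial>\<gamma>) - (\<integral>z. phi (fst z) \<partial>\<gamma>) - (\<integral>z. psi (snd z) \<partial>\<gamma>))"
    using integrable_qc ip iq by simp
  also have "(\<integral>z. phi (fst z) \<partial>\<gamma>) = (\<integral>x. phi x \<partial>\<mu>)"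
    using integral_distr[OF fst_meas_g, of phi] distr_fst by simp
  also have "(\<integral>z. psi (snd z) \<partial>\<gamma>) = (\<integral>y. psi y \<partial>\<nu>)"
    using integral_distr[OF snd_meas_g, of psi] distr_snd by simp
  also have "(\<integral>y. psi y \<partial>\<nu>) = (\<integral>x. psi (T x) \<partial>\<mu>)"
    using integral_distr[OF T_meas_mu_nu, of psi] nu_eq by simp
  also have "(\<integral>x. phi x \<partial>\<mu>) + (\<integral>x. psi (T x) \<partial>\<mu>) = (\<integral>x. quad_cost (x, T x) \<partial>\<mu>)"
    using ipm iqm by (simp add: key_eq)
  ultimately show ?thesis by (simp add: algebra_simps)
qed

end

end

lemma xlnx_ge: "0 \<le> (t::real) \<Longrightarrow> t - 1 \<le> t * ln t"
proof (cases "t = 0")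
  case False
  assume t: "0 \<le> t"
  with False have tp: "t > 0" by simp
  have "ln (1/t) \<le> 1/t - 1" using tp by (intro ln_le_minus_one) simp
  then have "- ln t \<le> 1/t - 1" using tp by (simp add: ln_div)
  then have "t * (- ln t) \<le> t * (1/t - 1)" using tp by (intro mult_left_mono) auto
  then show ?thesis using tp by (simp add: algebra_simps)
qed simp

lemma ereal_diff_nonneg_aux: "enn2ereal a \<le> enn2ereal b \<Longrightarrow> a \<noteq> \<infinity> \<Longrightarrow> 0 \<le> enn2ereal b - enn2ereal a"
  by (cases a; cases b) (auto simp: ennreal_le_iff)

lemma rel_ent_nonneg:
  assumes p: "prob_space p" and q: "prob_space q"
  shows "0 \<le> rel_ent p q"
proof (cases "\<exists>\<rho>\<in>borel_measurable q. (\<forall>x. 0 \<le> \<rho> x) \<and> p = density q (\<lambda>x. ennreal (\<rho> x))")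
  case False
  then have "rel_ent p q = \<infinity>" unfolding rel_ent_def by (intro if_not_P)
  then show ?thesis by simp
next
  case True
  define \<rho> where "\<rho> = (SOME \<rho>. \<rho> \<in> borel_measurable q \<and> (\<forall>x. 0 \<le> \<rho> x) \<and>
                          p = density q (\<lambda>x. ennreal (\<rho> x)))"
  have \<rho>: "\<rho> \<in> borel_measurable q" "\<forall>x. 0 \<le> \<rho> x" "p = density q (\<lambda>x. ennreal (\<rho> x))"
    using someI_ex[OF True[unfolded Bex_def]] unfolding \<rho>_def by auto
  note [measurable] = \<rho>(1)
  have eq: "rel_ent p q = enn2ereal (\<integral>\<^sup>+ x. ennreal (\<rho> x * ln (\<rho> x)) \<partial>q)
           - enn2ereal (\<integral>\<^sup>+ x. ennreal (- (\<rho> x * ln (\<rho> x))) \<partial>q)"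
    unfolding rel_ent_def using True by (simp add: \<rho>_def[symmetric] Let_def)
  have sq: "emeasure q (space q) = 1" using q by (simp add: prob_space.emeasure_space_1)
  have "emeasure p (space p) = 1" using p by (simp add: prob_space.emeasure_space_1)
  then have "emeasure (density q (\<lambda>x. ennreal (\<rho> x))) (space q) = 1" using \<rho>(3) by simp
  moreover have "emeasure (density q (\<lambda>x. ennreal (\<rho> x))) (space q) = (\<integral>\<^sup>+ x. ennreal (\<rho> x) * indicator (space q) x \<partial>q)"
    by (rule emeasure_density) auto
  moreover have "\<dots> = (\<integral>\<^sup>+ x. ennreal (\<rho> x) \<partial>q)" by (rule nn_integral_cong) simp
  ultimately have i1: "(\<integral>\<^sup>+ x. ennreal (\<rho> x) \<partial>q) = 1" by simp
  define P where "P = (\<integral>\<^sup>+ x. ennreal (\<rho> x * ln (\<rho> x)) \<partial>q)"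
  define N where "N = (\<integral>\<^sup>+ x. ennreal (- (\<rho> x * ln (\<rho> x))) \<partial>q)"
  have "N + 1 = (\<integral>\<^sup>+ x. ennreal (- (\<rho> x * ln (\<rho> x))) + ennreal (\<rho> x) \<partial>q)"
    unfolding N_def i1[symmetric] by (rule nn_integral_add[symmetric]) auto
  also have "\<dots> \<le> (\<integral>\<^sup>+ x. ennreal (\<rho> x * ln (\<rho> x)) + 1 \<partial>q)"
  proof (rule nn_integral_mono)
    fix x
    have r: "0 \<le> \<rho> x" using \<rho>(2) by simp
    have a: "\<rho> x - 1 \<le> \<rho> x * ln (\<rho> x)" using xlnx_ge[OF r] .
    show "ennreal (- (\<rho> x * ln (\<rho> x))) + ennreal (\<rho> x) \<le> ennreal (\<rho> x * ln (\<rho> x)) + 1"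
    proof (cases "0 \<le> \<rho> x * ln (\<rho> x)")
      case True
      then have "ennreal (- (\<rho> x * ln (\<rho> x))) = 0" by (simp add: ennreal_eq_0_iff)
      moreover have "ennreal (\<rho> x * ln (\<rho> x)) + 1 = ennreal (\<rho> x * ln (\<rho> x) + 1)"
        using True by (subst ennreal_plus) auto
      moreover have "ennreal (\<rho> x) \<le> ennreal (\<rho> x * ln (\<rho> x) + 1)" using a by (intro ennreal_leI) simp
      ultimately show ?thesis by simp
    next
      case False
      then have "ennreal (\<rho> x * ln (\<rho> x)) = 0" by (simp add: ennreal_eq_0_iff)
      moreover have "ennreal (- (\<rho> x * ln (\<rho> x))) + ennreal (\<rho> x) = ennreal (- (\<rho> x * ln (\<rho> x)) + \<rho> x)"
        using False r by (subst ennreal_plus) auto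
      moreover have "ennreal (- (\<rho> x * ln (\<rho> x)) + \<rho> x) \<le> ennreal 1" using a by (intro ennreal_leI) simp
      ultimately show ?thesis by simp
    qed
  qed
  also have "\<dots> = P + 1"
    unfolding P_def by (subst nn_integral_add) (auto simp: sq)
  finally have "N + 1 \<le> P + 1" .
  then have "1 + N \<le> 1 + P" by (simp add: add.commute)
  then have NP: "N \<le> P" unfolding ennreal_add_left_cancel_le by simp
  have "N \<le> (\<integral>\<^sup>+ x. 1 \<partial>q)"
    unfolding N_def
  proof (rule nn_integral_mono)
    fix x
    have r: "0 \<le> \<rho> x" using \<rho>(2) by simp
    have a: "\<rho> x - 1 \<le> \<rho> x * ln (\<rho> x)" using xlnx_ge[OF r] .
    have "- (\<rho> x * ln (\<rho> x)) \<le> 1" using a r by linarith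
    then show "ennreal (- (\<rho> x * ln (\<rho> x))) \<le> 1" using ennreal_leI[of "- (\<rho> x * ln (\<rho> x))" 1] by simp
  qed
  then have "N \<noteq> \<infinity>" using sq by (auto simp: top_unique)
  then show ?thesis unfolding eq P_def[symmetric] N_def[symmetric]
    using NP by (intro ereal_diff_nonneg_aux) (auto simp: less_eq_ennreal.rep_eq)
qed

definition cube :: "real \<Rightarrow> ('a::euclidean_space \<Rightarrow> int) \<Rightarrow> 'a set" where
  "cube \<delta> \<kappa> = {x. \<forall>i\<in>Basis. \<lfloor>(x \<bullet> i) / \<delta>\<rfloor> = \<kappa> i}"

definition Idx :: "int \<Rightarrow> ('a::euclidean_space \<Rightarrow> int) set" where
  "Idx m = PiE Basis (\<lambda>_. {-m..m})"

lemma cube_borel[measurable]: "cube \<delta> \<kappa> \<in> sets borel"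
  unfolding cube_def by measurable

lemma finite_Idx: "finite (Idx m)"
  unfolding Idx_def by (intro finite_PiE) auto

lemma card_Idx: "card (Idx m :: ('a::euclidean_space \<Rightarrow> int) set) = (nat (2 * m + 1)) ^ DIM('a)"
  unfolding Idx_def by (simp add: card_PiE)

lemma cube_disjoint:
  assumes "\<kappa> \<in> Idx m" "\<kappa>' \<in> Idx m" "\<kappa> \<noteq> \<kappa>'"
  shows "cube \<delta> \<kappa> \<inter> cube \<delta> \<kappa>' = {}"
proof -
  from assms obtain i where "i \<in> Basis" "\<kappa> i \<noteq> \<kappa>' i"
    unfolding Idx_def by (metis PiE_ext)
  then show ?thesis unfolding cube_def by auto
qed

lemma cube_diam:
  fixes x :: "'a::euclidean_space" and \<delta> :: real
  assumes "x \<in> cube \<delta> \<kappa>" "x' \<in> cube \<delta> \<kappa>" "\<delta> > 0"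
  shows "(norm (x - x'))\<^sup>2 \<le> real DIM('a) * \<delta>\<^sup>2"
proof -
  have c: "\<bar>(x - x') \<bullet> i\<bar> \<le> \<delta>" if i: "i \<in> Basis" for i
  proof -
    have "\<lfloor>(x \<bullet> i) / \<delta>\<rfloor> = \<lfloor>(x' \<bullet> i) / \<delta>\<rfloor>" using assms(1,2) i unfolding cube_def by auto
    then have "\<bar>(x \<bullet> i) / \<delta> - (x' \<bullet> i) / \<delta>\<bar> < 1"
      by (smt (verit) floor_less_iff le_floor_iff of_int_floor_le real_of_int_floor_gt_diff_one)
    then have "\<bar>(x \<bullet> i) - (x' \<bullet> i)\<bar> < \<delta>" using assms(3)
      by (simp add: diff_divide_distrib[symmetric] abs_divide divide_less_eq)
    then show ?thesis by (simp add: inner_diff_left)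
  qed
  have "(norm (x - x'))\<^sup>2 = (\<Sum>i\<in>Basis. ((x - x') \<bullet> i)\<^sup>2)"
    by (subst power2_norm_eq_inner, subst euclidean_inner) (simp add: power2_eq_square)
  also have "\<dots> \<le> (\<Sum>i\<in>(Basis::'a set). \<delta>\<^sup>2)"
  proof (intro sum_mono)
    fix i :: 'a assume "i \<in> Basis"
    then have "\<bar>(x - x') \<bullet> i\<bar> \<le> \<bar>\<delta>\<bar>" using c assms(3) by auto
    then show "((x - x') \<bullet> i)\<^sup>2 \<le> \<delta>\<^sup>2" by (simp add: abs_le_square_iff)
  qed
  also have "\<dots> = real DIM('a) * \<delta>\<^sup>2" by simp
  finally show ?thesis .
qed

lemma in_own_cube:
  fixes x :: "'a::euclidean_space"
  assumes "norm x \<le> m * \<delta>" "\<delta> > 0"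
  shows "x \<in> cube \<delta> (restrict (\<lambda>i. \<lfloor>(x \<bullet> i) / \<delta>\<rfloor>) Basis)"
    and "restrict (\<lambda>i. \<lfloor>(x \<bullet> i) / \<delta>\<rfloor>) Basis \<in> Idx m"
proof -
  show "x \<in> cube \<delta> (restrict (\<lambda>i. \<lfloor>(x \<bullet> i) / \<delta>\<rfloor>) Basis)" unfolding cube_def by simp
  have "\<lfloor>(x \<bullet> i) / \<delta>\<rfloor> \<in> {-m..m}" if i: "i \<in> Basis" for i
  proof -
    have "\<bar>x \<bullet> i\<bar> \<le> norm x" using i by (simp add: Basis_le_norm)
    then have "\<bar>x \<bullet> i\<bar> \<le> m * \<delta>" using assms(1) by linarith
    then have b: "-(m * \<delta>) \<le> x \<bullet> i" "x \<bullet> i \<le> m * \<delta>" by (simp_all add: abs_le_iff)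
    then have "-m \<le> (x \<bullet> i) / \<delta>" "(x \<bullet> i) / \<delta> \<le> m" using assms(2) by (simp_all add: le_divide_eq divide_le_eq)
    then show ?thesis by (auto simp: le_floor_iff floor_le_iff)
  qed
  then show "restrict (\<lambda>i. \<lfloor>(x \<bullet> i) / \<delta>\<rfloor>) Basis \<in> Idx m"
    unfolding Idx_def by auto
qed

context ot_setting
begin

definition J :: "real \<Rightarrow> int \<Rightarrow> ('a \<Rightarrow> int) set" where
  "J \<delta> m = {\<kappa> \<in> Idx m. 0 < measure \<mu> (cube \<delta> \<kappa>)}"

definition w :: "real \<Rightarrow> ('a \<Rightarrow> int) \<Rightarrow> real" where
  "w \<delta> \<kappa> = measure \<mu> (cube \<delta> \<kappa>)"

lemma finite_J: "finite (J \<delta> m)"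
  unfolding J_def by (rule finite_subset[OF _ finite_Idx]) auto

lemma J_sub: "J \<delta> m \<subseteq> Idx m" unfolding J_def by auto

lemma w_pos: "\<kappa> \<in> J \<delta> m \<Longrightarrow> 0 < w \<delta> \<kappa>" unfolding J_def w_def by auto

lemma w_le1: "w \<delta> \<kappa> \<le> 1"
  unfolding w_def using prob_mu by (simp add: prob_space.prob_le_1)

lemma emeasure_cube: "emeasure \<mu> (cube \<delta> \<kappa>) = ennreal (w \<delta> \<kappa>)"
  unfolding w_def using fin_mu by (simp add: finite_measure.emeasure_eq_measure)

lemma cube_mu[measurable]: "cube \<delta> \<kappa> \<in> sets \<mu>" by (simp add: sets_mu)

lemma cube_J_disj: "\<kappa> \<in> J \<delta> m \<Longrightarrow> \<kappa>' \<in> J \<delta> m \<Longrightarrow> \<kappa> \<noteq> \<kappa>' \<Longrightarrow> x \<in> cube \<delta> \<kappa> \<Longrightarrow> x \<notin> cube \<delta> \<kappa>'"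
  using cube_disjoint[of \<kappa> m \<kappa>' \<delta>] J_sub by blast

lemma sum_single_cube:
  assumes "\<kappa>0 \<in> J \<delta> m" "x \<in> cube \<delta> \<kappa>0"
  shows "(\<Sum>\<kappa>\<in>J \<delta> m. indicator (cube \<delta> \<kappa>) x * a \<kappa>) = (a \<kappa>0 :: 'b::semiring_1)"
proof -
  have "(\<Sum>\<kappa>\<in>J \<delta> m. indicator (cube \<delta> \<kappa>) x * a \<kappa>) = (\<Sum>\<kappa>\<in>J \<delta> m. if \<kappa> = \<kappa>0 then a \<kappa> else 0)"
    by (intro sum.cong refl) (use assms cube_J_disj in \<open>auto simp: indicator_def\<close>)
  also have "\<dots> = a \<kappa>0" using assms(1) finite_J by simp
  finally show ?thesis .
qed

lemma sum_no_cube: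
  assumes "\<forall>\<kappa>\<in>J \<delta> m. x \<notin> cube \<delta> \<kappa>"
  shows "(\<Sum>\<kappa>\<in>J \<delta> m. indicator (cube \<delta> \<kappa>) x * a \<kappa>) = (0 :: 'b::semiring_1)"
  using assms by (intro sum.neutral) auto

context
  fixes \<delta> :: real and m :: int
  assumes \<delta>: "\<delta> > 0" and Km: "\<forall>x\<in>K. norm x \<le> m * \<delta>"
begin

lemma AE_cover: "AE x in \<mu>. x \<in> K \<and> (\<exists>\<kappa>\<in>J \<delta> m. x \<in> cube \<delta> \<kappa>)"
proof -
  have null: "(\<Union>\<kappa>\<in>Idx m - J \<delta> m. cube \<delta> \<kappa>) \<in> null_sets \<mu>"
  proof (rule null_sets_UN')
    show "countable (Idx m - J \<delta> m)" using finite_Idx[of m] by (intro countable_finite) auto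
    fix \<kappa> assume "\<kappa> \<in> Idx m - J \<delta> m"
    then have "measure \<mu> (cube \<delta> \<kappa>) = 0" unfolding J_def using measure_nonneg[of \<mu> "cube \<delta> \<kappa>"] by (auto intro: antisym simp: not_less)
    then show "cube \<delta> \<kappa> \<in> null_sets \<mu>"
      using fin_mu by (simp add: finite_measure.emeasure_eq_measure null_sets_def)
  qed
  then have "AE x in \<mu>. x \<notin> (\<Union>\<kappa>\<in>Idx m - J \<delta> m. cube \<delta> \<kappa>)" by (rule AE_not_in)
  then show ?thesis using AE_K
  proof eventually_elim
    case (elim x)
    then show ?case using in_own_cube[of x m \<delta>] Km \<delta> by blast
  qed
qed

lemma nn_partition:
  assumes [measurable]: "g \<in> borel_measurable borel"
  shows "(\<Sum>\<kappa>\<in>J \<delta> m. \<integral>\<^sup>+ x. indicator (cube \<delta> \<kappa>) x * g x \<partial>\<mu>) = (\<integral>\<^sup>+ x. g x \<partial>\<mu>)"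
proof -
  have "(\<Sum>\<kappa>\<in>J \<delta> m. \<integral>\<^sup>+ x. indicator (cube \<delta> \<kappa>) x * g x \<partial>\<mu>)
      = (\<integral>\<^sup>+ x. (\<Sum>\<kappa>\<in>J \<delta> m. indicator (cube \<delta> \<kappa>) x * g x) \<partial>\<mu>)"
    by (rule nn_integral_sum[symmetric]) auto
  also have "\<dots> = (\<integral>\<^sup>+ x. g x \<partial>\<mu>)"
    by (rule nn_integral_cong_AE) (use AE_cover in \<open>eventually_elim, auto simp: sum_single_cube\<close>)
  finally show ?thesis .
qed

lemma sum_w: "(\<Sum>\<kappa>\<in>J \<delta> m. w \<delta> \<kappa>) = 1"
proof -
  have "(\<Sum>\<kappa>\<in>J \<delta> m. ennreal (w \<delta> \<kappa>)) = (\<Sum>\<kappa>\<in>J \<delta> m. \<integral>\<^sup>+ x. indicator (cube \<delta> \<kappa>) x * 1 \<partial>\<mu>)"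
    by (simp add: emeasure_cube)
  also have "\<dots> = (\<integral>\<^sup>+ x. 1 \<partial>\<mu>)" by (rule nn_partition) simp
  also have "\<dots> = 1" using prob_mu by (simp add: prob_space.emeasure_space_1)
  finally have "ennreal (\<Sum>\<kappa>\<in>J \<delta> m. w \<delta> \<kappa>) = 1"
    by (subst sum_ennreal[symmetric]) (auto simp: w_def)
  then show ?thesis by (simp add: sum_nonneg w_def)
qed

lemma J_nonempty: "J \<delta> m \<noteq> {}"
  using sum_w by auto

end

end

context ot_setting
begin

lemma sf_nu: "sigma_finite_measure \<nu>"
  using fin_nu by (simp add: finite_measure_def)

lemma sf_mu: "sigma_finite_measure \<mu>"
  using fin_mu by (simp add: finite_measure_def)

definition Nk :: "real \<Rightarrow> ('a \<Rightarrow> int) \<Rightarrow> 'a measure" where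
  "Nk \<delta> \<kappa> = distr (density \<mu> (indicator (cube \<delta> \<kappa>))) \<nu> T"

definition hk :: "real \<Rightarrow> ('a \<Rightarrow> int) \<Rightarrow> 'a \<Rightarrow> ennreal" where
  "hk \<delta> \<kappa> = RN_deriv \<nu> (Nk \<delta> \<kappa>)"

definition hr :: "real \<Rightarrow> ('a \<Rightarrow> int) \<Rightarrow> 'a \<Rightarrow> real" where
  "hr \<delta> \<kappa> y = enn2real (hk \<delta> \<kappa> y)"

lemma T_meas_dens[measurable]: "T \<in> measurable (density \<mu> (indicator (cube \<delta> \<kappa>))) \<nu>"
  by (simp add: measurable_cong_sets[OF sets_density[of \<mu>] refl])

lemma T_pre: "B \<in> sets borel \<Longrightarrow> T -` B \<in> sets borel"
  using measurable_sets_borel[OF T_meas, of B] by simp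

lemma sets_Nk: "sets (Nk \<delta> \<kappa>) = sets \<nu>" by (simp add: Nk_def)

lemma emeasure_Nk:
  assumes "B \<in> sets borel"
  shows "emeasure (Nk \<delta> \<kappa>) B = (\<integral>\<^sup>+ x. indicator (cube \<delta> \<kappa>) x * indicator B (T x) \<partial>\<mu>)"
proof -
  have "emeasure (Nk \<delta> \<kappa>) B = emeasure (density \<mu> (indicator (cube \<delta> \<kappa>))) (T -` B \<inter> space \<mu>)"
    unfolding Nk_def using assms by (subst emeasure_distr) (auto simp: sets_nu)
  also have "\<dots> = (\<integral>\<^sup>+ x. indicator (cube \<delta> \<kappa>) x * indicator (T -` B \<inter> space \<mu>) x \<partial>\<mu>)"
    using assms T_pre by (subst emeasure_density) (auto simp: sets_mu space_mu)
  also have "\<dots> = (\<integral>\<^sup>+ x. indicator (cube \<delta> \<kappa>) x * indicator B (T x) \<partial>\<mu>)"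
    by (intro nn_integral_cong) (auto simp: space_mu indicator_def)
  finally show ?thesis .
qed

lemma emeasure_nu: "B \<in> sets borel \<Longrightarrow> emeasure \<nu> B = emeasure \<mu> (T -` B)"
  by (subst nu_eq) (simp add: emeasure_distr sets_nu space_mu)

lemma Nk_le: "B \<in> sets borel \<Longrightarrow> emeasure (Nk \<delta> \<kappa>) B \<le> emeasure \<nu> B"
proof -
  assume B: "B \<in> sets borel"
  have "emeasure (Nk \<delta> \<kappa>) B \<le> (\<integral>\<^sup>+ x. indicator (T -` B) x \<partial>\<mu>)"
    unfolding emeasure_Nk[OF B] by (intro nn_integral_mono) (auto simp: indicator_def)
  also have "\<dots> = emeasure \<mu> (T -` B)"
    using B T_pre by (subst nn_integral_indicator) (auto simp: sets_mu)
  finally show ?thesis using emeasure_nu[OF B] by simp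
qed

lemma ac_Nk: "absolutely_continuous \<nu> (Nk \<delta> \<kappa>)"
  unfolding absolutely_continuous_def
proof
  fix B assume "B \<in> null_sets \<nu>"
  then have B: "B \<in> sets borel" "emeasure \<nu> B = 0" by (auto simp: sets_nu)
  then have "emeasure (Nk \<delta> \<kappa>) B = 0" using Nk_le[OF B(1), of \<delta> \<kappa>] by simp
  then show "B \<in> null_sets (Nk \<delta> \<kappa>)" using B by (simp add: null_sets_def sets_Nk sets_nu)
qed

lemma hk_meas[measurable]: "hk \<delta> \<kappa> \<in> borel_measurable borel"
  unfolding hk_def using borel_measurable_RN_deriv[of \<nu> "Nk \<delta> \<kappa>"]
  by (simp add: measurable_cong_sets[OF sets_nu refl])

lemma hr_meas[measurable]: "hr \<delta> \<kappa> \<in> borel_measurable borel"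
  unfolding hr_def by measurable

lemma hk_transfer:
  assumes [measurable]: "g \<in> borel_measurable borel"
  shows "(\<integral>\<^sup>+ y. hk \<delta> \<kappa> y * g y \<partial>\<nu>) = (\<integral>\<^sup>+ x. indicator (cube \<delta> \<kappa>) x * g (T x) \<partial>\<mu>)"
proof -
  have "(\<integral>\<^sup>+ y. hk \<delta> \<kappa> y * g y \<partial>\<nu>) = integral\<^sup>N (Nk \<delta> \<kappa>) g"
    unfolding hk_def
    by (rule sigma_finite_measure.RN_deriv_nn_integral[OF sf_nu ac_Nk sets_Nk, symmetric])
       (simp add: measurable_cong_sets[OF sets_nu refl])
  also have "\<dots> = (\<integral>\<^sup>+ x. g (T x) \<partial>density \<mu> (indicator (cube \<delta> \<kappa>)))"
    unfolding Nk_def by (rule nn_integral_distr) (auto simp: measurable_cong_sets[OF sets_nu refl])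
  also have "\<dots> = (\<integral>\<^sup>+ x. indicator (cube \<delta> \<kappa>) x * g (T x) \<partial>\<mu>)"
    by (rule nn_integral_density) (auto simp: measurable_cong_sets[OF sets_mu refl])
  finally show ?thesis .
qed

lemma hk_le1: "AE y in \<nu>. hk \<delta> \<kappa> y \<le> 1"
proof -
  define B where "B = {y. 1 < hk \<delta> \<kappa> y}"
  have B[measurable]: "B \<in> sets borel" unfolding B_def by measurable
  have fin: "(\<integral>\<^sup>+ y. indicator B y \<partial>\<nu>) \<noteq> \<infinity>"
    using B fin_nu by (simp add: sets_nu finite_measure.emeasure_finite)
  have "AE y in \<nu>. hk \<delta> \<kappa> y * indicator B y \<le> indicator B y"
  proof (rule ccontr)
    assume na: "\<not> (AE y in \<nu>. hk \<delta> \<kappa> y * indicator B y \<le> indicator B y)"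
    have "(\<integral>\<^sup>+ y. indicator B y \<partial>\<nu>) < (\<integral>\<^sup>+ y. hk \<delta> \<kappa> y * indicator B y \<partial>\<nu>)"
    proof (rule nn_integral_less)
      show "AE y in \<nu>. indicator B y \<le> hk \<delta> \<kappa> y * indicator B y"
      proof (rule AE_I2)
        fix y show "indicator B y \<le> hk \<delta> \<kappa> y * indicator B y"
          by (cases "y \<in> B") (simp_all add: B_def less_imp_le)
      qed
      show "(\<lambda>y. indicator B y) \<in> borel_measurable \<nu>" by measurable
      show "(\<lambda>y. hk \<delta> \<kappa> y * indicator B y) \<in> borel_measurable \<nu>" by measurable
      show "(\<integral>\<^sup>+ y. indicator B y \<partial>\<nu>) \<noteq> \<infinity>" by (rule fin)
      show "\<not> (AE y in \<nu>. hk \<delta> \<kappa> y * indicator B y \<le> indicator B y)" by (rule na)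
    qed
    also have "\<dots> = emeasure (Nk \<delta> \<kappa>) B"
      by (simp only: hk_transfer[of "indicator B", OF borel_measurable_indicator[OF B]] emeasure_Nk[OF B])
    also have "\<dots> \<le> emeasure \<nu> B" by (rule Nk_le[OF B])
    also have "\<dots> = (\<integral>\<^sup>+ y. indicator B y \<partial>\<nu>)" using B by (simp add: sets_nu)
    finally show False by simp
  qed
  then show ?thesis
  proof eventually_elim
    case (elim y)
    show ?case
    proof (cases "y \<in> B")
      case True
      then show ?thesis using elim by simp
    next
      case False
      then show ?thesis by (simp add: B_def not_less)
    qed
  qed
qed

lemma hk_hr: "AE y in \<nu>. hk \<delta> \<kappa> y = ennreal (hr \<delta> \<kappa> y) \<and> hr \<delta> \<kappa> y \<le> 1"
  using hk_le1[of \<delta> \<kappa>]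
proof eventually_elim
  case (elim y)
  then have fin: "hk \<delta> \<kappa> y < \<top>" by (rule le_less_trans) simp
  have 1: "hk \<delta> \<kappa> y = ennreal (hr \<delta> \<kappa> y)" unfolding hr_def using fin by simp
  have "enn2real (hk \<delta> \<kappa> y) \<le> enn2real 1" using elim by (intro enn2real_mono) auto
  then show ?case using 1 unfolding hr_def by simp
qed

lemma hr_nonneg: "0 \<le> hr \<delta> \<kappa> y" by (simp add: hr_def)

lemma hr_transfer:
  assumes [measurable]: "g \<in> borel_measurable borel"
  shows "(\<integral>\<^sup>+ y. ennreal (hr \<delta> \<kappa> y) * g y \<partial>\<nu>) = (\<integral>\<^sup>+ x. indicator (cube \<delta> \<kappa>) x * g (T x) \<partial>\<mu>)"
proof -
  have "(\<integral>\<^sup>+ y. ennreal (hr \<delta> \<kappa> y) * g y \<partial>\<nu>) = (\<integral>\<^sup>+ y. hk \<delta> \<kappa> y * g y \<partial>\<nu>)"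
    by (rule nn_integral_cong_AE) (use hk_hr[of \<delta> \<kappa>] in \<open>eventually_elim, auto\<close>)
  then show ?thesis using hk_transfer[OF assms] by simp
qed

end

context ot_setting
begin

lemma meas_inner_mu[measurable (raw)]:
  "case_prod G \<in> borel_measurable (N \<Otimes>\<^sub>M \<mu>) \<Longrightarrow> (\<lambda>x. \<integral>\<^sup>+ y. G x y \<partial>\<mu>) \<in> borel_measurable N"
  by (rule sigma_finite_measure.borel_measurable_nn_integral[OF sf_mu])

lemma meas_inner_nu[measurable (raw)]:
  "case_prod G \<in> borel_measurable (N \<Otimes>\<^sub>M \<nu>) \<Longrightarrow> (\<lambda>x. \<integral>\<^sup>+ y. G x y \<partial>\<nu>) \<in> borel_measurable N"
  by (rule sigma_finite_measure.borel_measurable_nn_integral[OF sf_nu])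

lemma sets_pair_mn[measurable_cong]: "sets (\<mu> \<Otimes>\<^sub>M \<nu>) = sets (borel \<Otimes>\<^sub>M borel)"
  by (simp add: sets_mu sets_nu cong: sets_pair_measure_cong)

lemma sets_pair_mm[measurable_cong]: "sets (N \<Otimes>\<^sub>M \<mu>) = sets (N \<Otimes>\<^sub>M borel)"
  by (simp add: sets_mu cong: sets_pair_measure_cong)

lemma meas_pair_mn: "h \<in> borel_measurable (borel \<Otimes>\<^sub>M borel) \<Longrightarrow> h \<in> borel_measurable (\<mu> \<Otimes>\<^sub>M \<nu>)"
  by (simp add: measurable_cong_sets[OF sets_pair_mn refl])

definition rho :: "real \<Rightarrow> int \<Rightarrow> 'a \<times> 'a \<Rightarrow> real" where
  "rho \<delta> m z = (\<Sum>\<kappa>\<in>J \<delta> m. indicator (cube \<delta> \<kappa>) (fst z) * hr \<delta> \<kappa> (snd z) / w \<delta> \<kappa>)"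

definition pi :: "real \<Rightarrow> int \<Rightarrow> ('a \<times> 'a) measure" where
  "pi \<delta> m = density (\<mu> \<Otimes>\<^sub>M \<nu>) (\<lambda>z. ennreal (rho \<delta> m z))"

definition DI :: "real \<Rightarrow> ('a \<Rightarrow> int) \<Rightarrow> ('a \<Rightarrow> 'a \<Rightarrow> ennreal) \<Rightarrow> ennreal" where
  "DI \<delta> \<kappa> G = (\<integral>\<^sup>+ x. indicator (cube \<delta> \<kappa>) x * (\<integral>\<^sup>+ x'. indicator (cube \<delta> \<kappa>) x' * G x x' \<partial>\<mu>) \<partial>\<mu>)"

lemma rho_meas[measurable]: "rho \<delta> m \<in> borel_measurable (borel \<Otimes>\<^sub>M borel)"
  unfolding rho_def by measurable

lemma rho_nonneg: "0 \<le> rho \<delta> m z"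
  unfolding rho_def by (intro sum_nonneg) (auto simp: hr_nonneg w_def)

lemma sets_pi: "sets (pi \<delta> m) = sets (\<mu> \<Otimes>\<^sub>M \<nu>)" by (simp add: pi_def)

lemma space_pi: "space (pi \<delta> m) = UNIV"
  by (simp add: pi_def space_pair_measure space_mu space_nu)

lemma int_const_cube: "(\<integral>\<^sup>+ x. indicator (cube \<delta> \<kappa>) x * c \<partial>\<mu>) = c * ennreal (w \<delta> \<kappa>)"
  by (subst nn_integral_multc) (auto simp: emeasure_cube mult.commute)

lemma DI_left:
  assumes [measurable]: "a \<in> borel_measurable borel"
  shows "DI \<delta> \<kappa> (\<lambda>x x'. a x) = ennreal (w \<delta> \<kappa>) * (\<integral>\<^sup>+ x. indicator (cube \<delta> \<kappa>) x * a x \<partial>\<mu>)"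
  unfolding DI_def int_const_cube
  by (subst nn_integral_cmult[symmetric]) (auto simp: mult_ac)

lemma DI_right:
  assumes [measurable]: "b \<in> borel_measurable borel"
  shows "DI \<delta> \<kappa> (\<lambda>x x'. b x') = ennreal (w \<delta> \<kappa>) * (\<integral>\<^sup>+ x'. indicator (cube \<delta> \<kappa>) x' * b x' \<partial>\<mu>)"
  unfolding DI_def int_const_cube by (simp add: mult_ac)

lemma inv_w_cancel:
  assumes "\<kappa> \<in> J \<delta> m"
  shows "ennreal (1 / w \<delta> \<kappa>) * (ennreal (w \<delta> \<kappa>) * X) = X"
proof -
  have "ennreal (1 / w \<delta> \<kappa>) * ennreal (w \<delta> \<kappa>) = ennreal (1 / w \<delta> \<kappa> * w \<delta> \<kappa>)"
    using w_pos[OF assms] by (intro ennreal_mult[symmetric]) auto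
  also have "\<dots> = 1" using w_pos[OF assms] by simp
  finally show ?thesis by (simp add: mult.assoc[symmetric])
qed

lemma rho_split:
  "ennreal (rho \<delta> m (x, y)) * g = (\<Sum>\<kappa>\<in>J \<delta> m. (ennreal (1 / w \<delta> \<kappa>) * indicator (cube \<delta> \<kappa>) x) * (ennreal (hr \<delta> \<kappa> y) * g))"
proof -
  have "ennreal (rho \<delta> m (x, y)) = (\<Sum>\<kappa>\<in>J \<delta> m. ennreal (indicator (cube \<delta> \<kappa>) x * hr \<delta> \<kappa> y / w \<delta> \<kappa>))"
    unfolding rho_def by (subst sum_ennreal) (auto simp: hr_nonneg w_def)
  also have "\<dots> = (\<Sum>\<kappa>\<in>J \<delta> m. (ennreal (1 / w \<delta> \<kappa>) * indicator (cube \<delta> \<kappa>) x) * ennreal (hr \<delta> \<kappa> y))"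
  proof (intro sum.cong refl)
    fix \<kappa>
    have "indicator (cube \<delta> \<kappa>) x * hr \<delta> \<kappa> y / w \<delta> \<kappa> = (1 / w \<delta> \<kappa>) * indicator (cube \<delta> \<kappa>) x * hr \<delta> \<kappa> y"
      by simp
    moreover have "ennreal ((1 / w \<delta> \<kappa>) * indicator (cube \<delta> \<kappa>) x * hr \<delta> \<kappa> y)
       = (ennreal (1 / w \<delta> \<kappa>) * ennreal (indicator (cube \<delta> \<kappa>) x)) * ennreal (hr \<delta> \<kappa> y)"
      by (subst ennreal_mult, simp add: w_def, simp add: hr_nonneg, subst ennreal_mult, simp_all add: w_def)
    ultimately show "ennreal (indicator (cube \<delta> \<kappa>) x * hr \<delta> \<kappa> y / w \<delta> \<kappa>) = (ennreal (1 / w \<delta> \<kappa>) * indicator (cube \<delta> \<kappa>) x) * ennreal (hr \<delta> \<kappa> y)"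
      by (simp add: ennreal_indicator)
  qed
  finally show ?thesis by (simp add: sum_distrib_right mult.assoc)
qed

lemma inner_meas[measurable]:
  assumes [measurable]: "g \<in> borel_measurable (borel \<Otimes>\<^sub>M borel)" "C \<in> sets borel"
  shows "(\<lambda>x. \<integral>\<^sup>+ x'. indicator C x' * g (x, T x') \<partial>\<mu>) \<in> borel_measurable borel"
proof (rule meas_inner_mu)
  show "(\<lambda>(x, x'). indicator C x' * g (x, T x')) \<in> borel_measurable (borel \<Otimes>\<^sub>M \<mu>)"
    by measurable
qed

lemma transfer:
  assumes [measurable]: "g \<in> borel_measurable (borel \<Otimes>\<^sub>M borel)"
  shows "(\<integral>\<^sup>+ z. g z \<partial>pi \<delta> m) = (\<Sum>\<kappa>\<in>J \<delta> m. ennreal (1 / w \<delta> \<kappa>) * DI \<delta> \<kappa> (\<lambda>x x'. g (x, T x')))"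
proof -
  have "(\<integral>\<^sup>+ z. g z \<partial>pi \<delta> m) = (\<integral>\<^sup>+ z. ennreal (rho \<delta> m z) * g z \<partial>(\<mu> \<Otimes>\<^sub>M \<nu>))"
    unfolding pi_def by (rule nn_integral_density) (auto intro!: meas_pair_mn)
  also have "\<dots> = (\<integral>\<^sup>+ x. \<integral>\<^sup>+ y. ennreal (rho \<delta> m (x, y)) * g (x, y) \<partial>\<nu> \<partial>\<mu>)"
    by (rule sigma_finite_measure.nn_integral_fst[OF sf_nu, symmetric]) (auto intro!: meas_pair_mn simp: measurable_cong_sets[OF sets_mu refl])
  also have "\<dots> = (\<integral>\<^sup>+ x. (\<Sum>\<kappa>\<in>J \<delta> m. (ennreal (1 / w \<delta> \<kappa>) * indicator (cube \<delta> \<kappa>) x) *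
        (\<integral>\<^sup>+ x'. indicator (cube \<delta> \<kappa>) x' * g (x, T x') \<partial>\<mu>)) \<partial>\<mu>)"
  proof (intro nn_integral_cong)
    fix x
    have "(\<integral>\<^sup>+ y. ennreal (rho \<delta> m (x, y)) * g (x, y) \<partial>\<nu>)
        = (\<integral>\<^sup>+ y. (\<Sum>\<kappa>\<in>J \<delta> m. (ennreal (1 / w \<delta> \<kappa>) * indicator (cube \<delta> \<kappa>) x) * (ennreal (hr \<delta> \<kappa> y) * g (x, y))) \<partial>\<nu>)"
      by (simp only: rho_split)
    also have "\<dots> = (\<Sum>\<kappa>\<in>J \<delta> m. \<integral>\<^sup>+ y. (ennreal (1 / w \<delta> \<kappa>) * indicator (cube \<delta> \<kappa>) x) * (ennreal (hr \<delta> \<kappa> y) * g (x, y)) \<partial>\<nu>)"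
      by (rule nn_integral_sum) auto
    also have "\<dots> = (\<Sum>\<kappa>\<in>J \<delta> m. (ennreal (1 / w \<delta> \<kappa>) * indicator (cube \<delta> \<kappa>) x) * (\<integral>\<^sup>+ y. ennreal (hr \<delta> \<kappa> y) * g (x, y) \<partial>\<nu>))"
      by (intro sum.cong refl nn_integral_cmult) auto
    also have "\<dots> = (\<Sum>\<kappa>\<in>J \<delta> m. (ennreal (1 / w \<delta> \<kappa>) * indicator (cube \<delta> \<kappa>) x) * (\<integral>\<^sup>+ x'. indicator (cube \<delta> \<kappa>) x' * g (x, T x') \<partial>\<mu>))"
      by (intro sum.cong refl arg_cong2[where f="(*)"] hr_transfer) auto
    finally show "(\<integral>\<^sup>+ y. ennreal (rho \<delta> m (x, y)) * g (x, y) \<partial>\<nu>) = \<dots>" .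
  qed
  also have "\<dots> = (\<Sum>\<kappa>\<in>J \<delta> m. \<integral>\<^sup>+ x. (ennreal (1 / w \<delta> \<kappa>) * indicator (cube \<delta> \<kappa>) x) *
        (\<integral>\<^sup>+ x'. indicator (cube \<delta> \<kappa>) x' * g (x, T x') \<partial>\<mu>) \<partial>\<mu>)"
    by (rule nn_integral_sum) (auto simp: measurable_cong_sets[OF sets_mu refl])
  also have "\<dots> = (\<Sum>\<kappa>\<in>J \<delta> m. ennreal (1 / w \<delta> \<kappa>) * DI \<delta> \<kappa> (\<lambda>x x'. g (x, T x')))"
    unfolding DI_def
    by (intro sum.cong refl) (subst nn_integral_cmult[symmetric], auto simp: mult.assoc)
  finally show ?thesis .
qed


lemma sets_pi'[measurable_cong]: "sets (pi \<delta> m) = sets (borel \<Otimes>\<^sub>M borel)"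
  using sets_pi sets_pair_mn by simp

lemma fst_pi[measurable]: "fst \<in> measurable (pi \<delta> m) \<mu>"
  by (simp add: measurable_cong_sets[OF sets_pi' sets_mu])

lemma snd_pi[measurable]: "snd \<in> measurable (pi \<delta> m) \<nu>"
  by (simp add: measurable_cong_sets[OF sets_pi' sets_nu])

context
  fixes \<delta> :: real and m :: int
  assumes \<delta>: "\<delta> > 0" and Km: "\<forall>x\<in>K. norm x \<le> m * \<delta>"
begin

lemma pi_fst: "distr (pi \<delta> m) \<mu> fst = \<mu>"
proof (rule measure_eqI)
  show "sets (distr (pi \<delta> m) \<mu> fst) = sets \<mu>" by simp
  fix A assume "A \<in> sets (distr (pi \<delta> m) \<mu> fst)"
  then have A[measurable]: "A \<in> sets borel" by (simp add: sets_mu)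
  have "emeasure (distr (pi \<delta> m) \<mu> fst) A = emeasure (pi \<delta> m) (A \<times> UNIV)"
    by (subst emeasure_distr) (auto simp: sets_mu space_pi vimage_fst vimage_snd)
  also have "\<dots> = (\<integral>\<^sup>+ z. indicator (A \<times> UNIV) z \<partial>pi \<delta> m)"
    by (rule nn_integral_indicator[symmetric]) (simp add: sets_pi')
  also have "\<dots> = (\<Sum>\<kappa>\<in>J \<delta> m. ennreal (1 / w \<delta> \<kappa>) * DI \<delta> \<kappa> (\<lambda>x x'. indicator (A \<times> UNIV) (x, T x')))"
    by (rule transfer) measurable
  also have "\<dots> = (\<Sum>\<kappa>\<in>J \<delta> m. \<integral>\<^sup>+ x. indicator (cube \<delta> \<kappa>) x * indicator A x \<partial>\<mu>)"
  proof (intro sum.cong refl)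
    fix \<kappa> assume k: "\<kappa> \<in> J \<delta> m"
    have "DI \<delta> \<kappa> (\<lambda>x x'. indicator (A \<times> UNIV) (x, T x')) = DI \<delta> \<kappa> (\<lambda>x x'. indicator A x)"
      by (simp add: indicator_times)
    then show "ennreal (1 / w \<delta> \<kappa>) * DI \<delta> \<kappa> (\<lambda>x x'. indicator (A \<times> UNIV) (x, T x'))
        = (\<integral>\<^sup>+ x. indicator (cube \<delta> \<kappa>) x * indicator A x \<partial>\<mu>)"
      by (simp add: DI_left inv_w_cancel[OF k])
  qed
  also have "\<dots> = (\<integral>\<^sup>+ x. indicator A x \<partial>\<mu>)" by (rule nn_partition[OF \<delta> Km]) simp
  also have "\<dots> = emeasure \<mu> A" by (simp add: sets_mu)
  finally show "emeasure (distr (pi \<delta> m) \<mu> fst) A = emeasure \<mu> A" .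
qed

lemma pi_snd: "distr (pi \<delta> m) \<nu> snd = \<nu>"
proof (rule measure_eqI)
  show "sets (distr (pi \<delta> m) \<nu> snd) = sets \<nu>" by simp
  fix B assume "B \<in> sets (distr (pi \<delta> m) \<nu> snd)"
  then have B[measurable]: "B \<in> sets borel" by (simp add: sets_nu)
  have "emeasure (distr (pi \<delta> m) \<nu> snd) B = emeasure (pi \<delta> m) (UNIV \<times> B)"
    by (subst emeasure_distr) (auto simp: sets_nu space_pi vimage_fst vimage_snd)
  also have "\<dots> = (\<integral>\<^sup>+ z. indicator (UNIV \<times> B) z \<partial>pi \<delta> m)"
    by (rule nn_integral_indicator[symmetric]) (simp add: sets_pi')
  also have "\<dots> = (\<Sum>\<kappa>\<in>J \<delta> m. ennreal (1 / w \<delta> \<kappa>) * DI \<delta> \<kappa> (\<lambda>x x'. indicator (UNIV \<times> B) (x, T x')))"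
    by (rule transfer) measurable
  also have "\<dots> = (\<Sum>\<kappa>\<in>J \<delta> m. \<integral>\<^sup>+ x. indicator (cube \<delta> \<kappa>) x * indicator B (T x) \<partial>\<mu>)"
  proof (intro sum.cong refl)
    fix \<kappa> assume k: "\<kappa> \<in> J \<delta> m"
    have "DI \<delta> \<kappa> (\<lambda>x x'. indicator (UNIV \<times> B) (x, T x')) = DI \<delta> \<kappa> (\<lambda>x x'. indicator B (T x'))"
      by (simp add: indicator_times)
    then show "ennreal (1 / w \<delta> \<kappa>) * DI \<delta> \<kappa> (\<lambda>x x'. indicator (UNIV \<times> B) (x, T x'))
        = (\<integral>\<^sup>+ x. indicator (cube \<delta> \<kappa>) x * indicator B (T x) \<partial>\<mu>)"
      by (simp add: DI_right inv_w_cancel[OF k])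
  qed
  also have "\<dots> = (\<integral>\<^sup>+ x. indicator B (T x) \<partial>\<mu>)" by (rule nn_partition[OF \<delta> Km]) simp
  also have "\<dots> = (\<integral>\<^sup>+ x. indicator (T -` B) x \<partial>\<mu>)" by (simp add: indicator_def)
  also have "\<dots> = emeasure \<mu> (T -` B)" using T_pre[OF B] by (simp add: sets_mu)
  also have "\<dots> = emeasure \<nu> B" by (rule emeasure_nu[OF B, symmetric])
  finally show "emeasure (distr (pi \<delta> m) \<nu> snd) B = emeasure \<nu> B" .
qed

lemma pi_coupling: "coupling \<mu> \<nu> (pi \<delta> m)"
  unfolding coupling_def using pi_fst pi_snd sets_pi by simp

end

end

context ot_setting
begin

lemma qc_meas[measurable]: "quad_cost \<in> borel_measurable (borel \<Otimes>\<^sub>M borel)"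
  unfolding quad_cost_def by measurable

lemma DI_add:
  assumes "case_prod G1 \<in> borel_measurable (borel \<Otimes>\<^sub>M borel)" "case_prod G2 \<in> borel_measurable (borel \<Otimes>\<^sub>M borel)"
  shows "DI \<delta> \<kappa> (\<lambda>x x'. G1 x x' + G2 x x') = DI \<delta> \<kappa> G1 + DI \<delta> \<kappa> G2"
proof -
  have G1'[measurable]: "(\<lambda>z. G1 (fst z) (snd z)) \<in> borel_measurable (borel \<Otimes>\<^sub>M \<mu>)"
    using assms(1) by (simp add: measurable_cong_sets[OF sets_pair_mm refl] case_prod_beta')
  have G2'[measurable]: "(\<lambda>z. G2 (fst z) (snd z)) \<in> borel_measurable (borel \<Otimes>\<^sub>M \<mu>)"
    using assms(2) by (simp add: measurable_cong_sets[OF sets_pair_mm refl] case_prod_beta')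
  have m1: "(\<lambda>x. \<integral>\<^sup>+ x'. indicator (cube \<delta> \<kappa>) x' * G1 x x' \<partial>\<mu>) \<in> borel_measurable borel"
    by (rule meas_inner_mu) (unfold case_prod_beta', measurable)
  have m2: "(\<lambda>x. \<integral>\<^sup>+ x'. indicator (cube \<delta> \<kappa>) x' * G2 x x' \<partial>\<mu>) \<in> borel_measurable borel"
    by (rule meas_inner_mu) (unfold case_prod_beta', measurable)
  have G1m: "G1 x \<in> borel_measurable \<mu>" for x
    using measurable_Pair2[OF G1'] by simp
  have G2m: "G2 x \<in> borel_measurable \<mu>" for x
    using measurable_Pair2[OF G2'] by simp
  have "DI \<delta> \<kappa> (\<lambda>x x'. G1 x x' + G2 x x') = (\<integral>\<^sup>+ x. indicator (cube \<delta> \<kappa>) x *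
      ((\<integral>\<^sup>+ x'. indicator (cube \<delta> \<kappa>) x' * G1 x x' \<partial>\<mu>) + (\<integral>\<^sup>+ x'. indicator (cube \<delta> \<kappa>) x' * G2 x x' \<partial>\<mu>)) \<partial>\<mu>)"
    unfolding DI_def
  proof (intro nn_integral_cong arg_cong2[where f="(*)"] refl)
    fix x
    show "(\<integral>\<^sup>+ x'. indicator (cube \<delta> \<kappa>) x' * (G1 x x' + G2 x x') \<partial>\<mu>) =
      (\<integral>\<^sup>+ x'. indicator (cube \<delta> \<kappa>) x' * G1 x x' \<partial>\<mu>) + (\<integral>\<^sup>+ x'. indicator (cube \<delta> \<kappa>) x' * G2 x x' \<partial>\<mu>)"
      using G1m G2m by (subst nn_integral_add[symmetric]) (auto simp: distrib_left)
  qed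
  also have "\<dots> = DI \<delta> \<kappa> G1 + DI \<delta> \<kappa> G2"
    unfolding DI_def using m1 m2
    by (subst nn_integral_add[symmetric]) (auto simp: distrib_left measurable_cong_sets[OF sets_mu refl])
  finally show ?thesis .
qed

lemma DI_mono:
  assumes "\<And>x x'. x \<in> K \<Longrightarrow> x' \<in> K \<Longrightarrow> x \<in> cube \<delta> \<kappa> \<Longrightarrow> x' \<in> cube \<delta> \<kappa> \<Longrightarrow> G1 x x' \<le> G2 x x'"
  shows "DI \<delta> \<kappa> G1 \<le> DI \<delta> \<kappa> G2"
  unfolding DI_def
proof (rule nn_integral_mono_AE)
  show "AE x in \<mu>. indicator (cube \<delta> \<kappa>) x * (\<integral>\<^sup>+ x'. indicator (cube \<delta> \<kappa>) x' * G1 x x' \<partial>\<mu>)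
      \<le> indicator (cube \<delta> \<kappa>) x * (\<integral>\<^sup>+ x'. indicator (cube \<delta> \<kappa>) x' * G2 x x' \<partial>\<mu>)"
    using AE_K
  proof eventually_elim
    case (elim x)
    show ?case
    proof (cases "x \<in> cube \<delta> \<kappa>")
      case True
      have "(\<integral>\<^sup>+ x'. indicator (cube \<delta> \<kappa>) x' * G1 x x' \<partial>\<mu>) \<le> (\<integral>\<^sup>+ x'. indicator (cube \<delta> \<kappa>) x' * G2 x x' \<partial>\<mu>)"
      proof (rule nn_integral_mono_AE)
        show "AE x' in \<mu>. indicator (cube \<delta> \<kappa>) x' * G1 x x' \<le> indicator (cube \<delta> \<kappa>) x' * G2 x x'"
          using AE_K by eventually_elim (use assms elim True in \<open>auto simp: indicator_def\<close>)
      qed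
      then show ?thesis by (rule mult_left_mono) simp
    qed simp
  qed
qed

lemma phi_shift: "\<exists>B. \<forall>x\<in>K. 0 \<le> phi x + B \<and> phi x + B \<le> 2 * B"
proof -
  obtain B where B: "\<forall>x\<in>K. norm (phi x) \<le> B" using phi_bound ..
  then show ?thesis by (intro exI[of _ B]) auto
qed

context
  fixes \<delta> :: real and m :: int
  assumes \<delta>: "\<delta> > 0" and Km: "\<forall>x\<in>K. norm x \<le> m * \<delta>"
begin

lemma cost_nn:
  "(\<integral>\<^sup>+ z. ennreal (quad_cost z) \<partial>pi \<delta> m)
    \<le> (\<integral>\<^sup>+ x. ennreal (quad_cost (x, T x)) \<partial>\<mu>) + ennreal (M / 2 * (real DIM('a) * \<delta>\<^sup>2))"
proof -
  obtain Bp where Bp: "\<forall>x\<in>K. 0 \<le> phi x + Bp \<and> phi x + Bp \<le> 2 * Bp" using phi_shift ..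
  define Kc where "Kc = M / 2 * (real DIM('a) * \<delta>\<^sup>2)"
  have Kc: "0 \<le> Kc" unfolding Kc_def using M_nonneg by simp
  define P where "P x = ennreal (phi x + Bp)" for x
  have P_meas[measurable]: "P \<in> borel_measurable borel" unfolding P_def by measurable
  have qm[measurable]: "(\<lambda>(x, x'). ennreal (quad_cost (x, T x'))) \<in> borel_measurable (borel \<Otimes>\<^sub>M borel)"
    unfolding quad_cost_def by measurable
  have qm2[measurable]: "(\<lambda>x. ennreal (quad_cost (x, T x))) \<in> borel_measurable borel"
    unfolding quad_cost_def by measurable
  have key: "DI \<delta> \<kappa> (\<lambda>x x'. ennreal (quad_cost (x, T x')))
      \<le> ennreal (w \<delta> \<kappa>) * (\<integral>\<^sup>+ x. indicator (cube \<delta> \<kappa>) x * ennreal (quad_cost (x, T x)) \<partial>\<mu>)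
        + ennreal (w \<delta> \<kappa>) * (ennreal Kc * ennreal (w \<delta> \<kappa>))" for \<kappa>
  proof -
    have fin: "DI \<delta> \<kappa> (\<lambda>x x'. P x') \<noteq> \<infinity>"
    proof -
      have "(\<integral>\<^sup>+ x'. indicator (cube \<delta> \<kappa>) x' * P x' \<partial>\<mu>) \<le> (\<integral>\<^sup>+ x'. ennreal (2 * Bp) \<partial>\<mu>)"
        by (rule nn_integral_mono_AE)
           (use AE_K in \<open>eventually_elim, use Bp in \<open>auto simp: P_def indicator_def intro: ennreal_leI\<close>\<close>)
      also have "\<dots> < \<infinity>" using prob_mu by (simp add: prob_space.emeasure_space_1)
      finally show ?thesis unfolding DI_right[OF P_meas] by (simp add: ennreal_mult_eq_top_iff less_top)
    qed
    have "DI \<delta> \<kappa> (\<lambda>x x'. ennreal (quad_cost (x, T x'))) + DI \<delta> \<kappa> (\<lambda>x x'. P x')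
        = DI \<delta> \<kappa> (\<lambda>x x'. ennreal (quad_cost (x, T x')) + P x')"
      by (rule DI_add[symmetric]) measurable
    also have "\<dots> \<le> DI \<delta> \<kappa> (\<lambda>x x'. (ennreal (quad_cost (x', T x')) + ennreal Kc) + P x)"
    proof (rule DI_mono)
      fix x x' assume x: "x \<in> K" "x' \<in> K" "x \<in> cube \<delta> \<kappa>" "x' \<in> cube \<delta> \<kappa>"
      have "(norm (x - x'))\<^sup>2 \<le> real DIM('a) * \<delta>\<^sup>2" by (rule cube_diam[OF x(3,4) \<delta>])
      then have "M / 2 * (norm (x - x'))\<^sup>2 \<le> Kc" unfolding Kc_def using M_nonneg
        by (intro mult_left_mono) auto
      then have r: "quad_cost (x, T x') + (phi x' + Bp) \<le> (quad_cost (x', T x') + Kc) + (phi x + Bp)"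
        using key2[of x x'] by simp
      have nn: "0 \<le> quad_cost (x, T x')" "0 \<le> phi x' + Bp" "0 \<le> quad_cost (x', T x')" "0 \<le> phi x + Bp"
        using Bp x by (auto simp: quad_cost_def)
      have "ennreal (quad_cost (x, T x')) + P x' = ennreal (quad_cost (x, T x') + (phi x' + Bp))"
        unfolding P_def using nn by (simp add: ennreal_plus)
      also have "\<dots> \<le> ennreal ((quad_cost (x', T x') + Kc) + (phi x + Bp))" using r by (rule ennreal_leI)
      also have "\<dots> = (ennreal (quad_cost (x', T x')) + ennreal Kc) + P x"
        unfolding P_def using nn Kc by (simp add: ennreal_plus)
      finally show "ennreal (quad_cost (x, T x')) + P x' \<le> (ennreal (quad_cost (x', T x')) + ennreal Kc) + P x" .
    qed
    also have "\<dots> = DI \<delta> \<kappa> (\<lambda>x x'. ennreal (quad_cost (x', T x'))) + DI \<delta> \<kappa> (\<lambda>x x'. ennreal Kc) + DI \<delta> \<kappa> (\<lambda>x x'. P x)"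
    proof -
      have "DI \<delta> \<kappa> (\<lambda>x x'. (ennreal (quad_cost (x', T x')) + ennreal Kc) + P x)
          = DI \<delta> \<kappa> (\<lambda>x x'. ennreal (quad_cost (x', T x')) + ennreal Kc) + DI \<delta> \<kappa> (\<lambda>x x'. P x)"
        by (rule DI_add) measurable
      moreover have "DI \<delta> \<kappa> (\<lambda>x x'. ennreal (quad_cost (x', T x')) + ennreal Kc)
          = DI \<delta> \<kappa> (\<lambda>x x'. ennreal (quad_cost (x', T x'))) + DI \<delta> \<kappa> (\<lambda>x x'. ennreal Kc)"
        by (rule DI_add) measurable
      ultimately show ?thesis by simp
    qed
    also have "DI \<delta> \<kappa> (\<lambda>x x'. P x) = DI \<delta> \<kappa> (\<lambda>x x'. P x')"
      by (simp add: DI_left DI_right)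
    finally have "DI \<delta> \<kappa> (\<lambda>x x'. ennreal (quad_cost (x, T x'))) \<le>
        DI \<delta> \<kappa> (\<lambda>x x'. ennreal (quad_cost (x', T x'))) + DI \<delta> \<kappa> (\<lambda>x x'. ennreal Kc)"
      using fin by (simp add: ennreal_add_left_cancel_le add.commute[of _ "DI \<delta> \<kappa> (\<lambda>x x'. P x')"] add.assoc)
    also have "\<dots> = ennreal (w \<delta> \<kappa>) * (\<integral>\<^sup>+ x. indicator (cube \<delta> \<kappa>) x * ennreal (quad_cost (x, T x)) \<partial>\<mu>)
        + ennreal (w \<delta> \<kappa>) * (ennreal Kc * ennreal (w \<delta> \<kappa>))"
      using DI_right[OF qm2, of \<delta> \<kappa>] DI_left[of "\<lambda>_. ennreal Kc" \<delta> \<kappa>] by (simp add: int_const_cube)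
    finally show ?thesis .
  qed
  have "(\<integral>\<^sup>+ z. ennreal (quad_cost z) \<partial>pi \<delta> m)
      = (\<Sum>\<kappa>\<in>J \<delta> m. ennreal (1 / w \<delta> \<kappa>) * DI \<delta> \<kappa> (\<lambda>x x'. ennreal (quad_cost (x, T x'))))"
    by (rule transfer) (simp add: quad_cost_def case_prod_beta, measurable)
  also have "\<dots> \<le> (\<Sum>\<kappa>\<in>J \<delta> m. (\<integral>\<^sup>+ x. indicator (cube \<delta> \<kappa>) x * ennreal (quad_cost (x, T x)) \<partial>\<mu>)
        + ennreal Kc * ennreal (w \<delta> \<kappa>))"
  proof (intro sum_mono)
    fix \<kappa> assume k: "\<kappa> \<in> J \<delta> m"
    have "ennreal (1 / w \<delta> \<kappa>) * DI \<delta> \<kappa> (\<lambda>x x'. ennreal (quad_cost (x, T x')))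
        \<le> ennreal (1 / w \<delta> \<kappa>) * (ennreal (w \<delta> \<kappa>) * (\<integral>\<^sup>+ x. indicator (cube \<delta> \<kappa>) x * ennreal (quad_cost (x, T x)) \<partial>\<mu>)
        + ennreal (w \<delta> \<kappa>) * (ennreal Kc * ennreal (w \<delta> \<kappa>)))"
      by (rule mult_left_mono[OF key]) simp
    also have "\<dots> = (\<integral>\<^sup>+ x. indicator (cube \<delta> \<kappa>) x * ennreal (quad_cost (x, T x)) \<partial>\<mu>)
        + ennreal Kc * ennreal (w \<delta> \<kappa>)"
      by (simp add: distrib_left inv_w_cancel[OF k])
    finally show "ennreal (1 / w \<delta> \<kappa>) * DI \<delta> \<kappa> (\<lambda>x x'. ennreal (quad_cost (x, T x'))) \<le> \<dots>" .
  qed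
  also have "\<dots> = (\<integral>\<^sup>+ x. ennreal (quad_cost (x, T x)) \<partial>\<mu>) + ennreal Kc * (\<Sum>\<kappa>\<in>J \<delta> m. ennreal (w \<delta> \<kappa>))"
    by (simp add: sum.distrib nn_partition[OF \<delta> Km qm2] sum_distrib_left)
  also have "(\<Sum>\<kappa>\<in>J \<delta> m. ennreal (w \<delta> \<kappa>)) = 1"
    using sum_w[OF \<delta> Km] by (subst sum_ennreal) (auto simp: w_def)
  finally show ?thesis unfolding Kc_def by simp
qed

end

end

lemma entropy_le_ln_card:
  fixes w :: "'i \<Rightarrow> real"
  assumes fin: "finite I" and pos: "\<And>i. i \<in> I \<Longrightarrow> 0 < w i" and s: "(\<Sum>i\<in>I. w i) = 1"
  shows "(\<Sum>i\<in>I. w i * ln (1 / w i)) \<le> ln (card I)"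
proof -
  have ne: "I \<noteq> {}" using s by auto
  define N where "N = real (card I)"
  have N: "N > 0" unfolding N_def using fin ne by (simp add: card_gt_0_iff)
  have "(\<Sum>i\<in>I. w i * ln (1 / w i)) = (\<Sum>i\<in>I. w i * ln (1 / (w i * N)) + w i * ln N)"
  proof (intro sum.cong refl)
    fix i assume i: "i \<in> I"
    have "ln (1 / w i) = ln (1 / (w i * N)) + ln N" using pos[OF i] N
      by (simp add: ln_div ln_mult)
    then show "w i * ln (1 / w i) = w i * ln (1 / (w i * N)) + w i * ln N" by (simp add: algebra_simps)
  qed
  also have "\<dots> = (\<Sum>i\<in>I. w i * ln (1 / (w i * N))) + ln N"
    by (simp add: sum.distrib sum_distrib_right[symmetric] s)
  also have "(\<Sum>i\<in>I. w i * ln (1 / (w i * N))) \<le> (\<Sum>i\<in>I. w i * (1 / (w i * N) - 1))"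
  proof (intro sum_mono mult_left_mono)
    fix i assume i: "i \<in> I"
    show "ln (1 / (w i * N)) \<le> 1 / (w i * N) - 1" using pos[OF i] N by (intro ln_le_minus_one) simp
    show "0 \<le> w i" using pos[OF i] by simp
  qed
  also have "\<dots> = (\<Sum>i\<in>I. 1 / N - w i)"
  proof (intro sum.cong refl)
    fix i assume "i \<in> I"
    then show "w i * (1 / (w i * N) - 1) = 1 / N - w i" using pos[of i] N by (simp add: field_simps)
  qed
  also have "\<dots> = 0" using N fin ne by (simp add: sum_subtractf s N_def)
  finally show ?thesis by (simp add: N_def)
qed

context ot_setting
begin

lemma prob_pair: "prob_space (\<mu> \<Otimes>\<^sub>M \<nu>)"
proof -
  interpret P: pair_prob_space \<mu> \<nu>
    by (simp add: pair_prob_space_def pair_sigma_finite_def prob_mu prob_nu sf_mu sf_nu)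
  show ?thesis by (rule P.P.prob_space_axioms)
qed

definition L :: "real \<Rightarrow> int \<Rightarrow> 'a \<Rightarrow> real" where
  "L \<delta> m x = (\<Sum>\<kappa>\<in>J \<delta> m. indicator (cube \<delta> \<kappa>) x * ln (1 / w \<delta> \<kappa>))"

lemma L_meas[measurable]: "L \<delta> m \<in> borel_measurable borel"
  unfolding L_def by measurable

lemma L_nonneg: "0 \<le> L \<delta> m x"
  unfolding L_def
proof (intro sum_nonneg mult_nonneg_nonneg)
  fix \<kappa> assume k: "\<kappa> \<in> J \<delta> m"
  show "0 \<le> ln (1 / w \<delta> \<kappa>)" using w_pos[OF k] w_le1[of \<delta> \<kappa>] by (intro ln_ge_zero) simp
qed simp

lemma xlnx_bound:
  fixes r b :: real
  assumes "0 \<le> r" "r \<le> b"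
  shows "r * ln r \<le> r * ln b"
proof (cases "r = 0")
  case False
  then have "0 < r" using assms by simp
  then show ?thesis using assms by (intro mult_left_mono) (auto intro: ln_mono)
qed simp

lemma rho_ln_bound:
  assumes h: "\<forall>\<kappa>\<in>J \<delta> m. hr \<delta> \<kappa> y \<le> 1"
  shows "rho \<delta> m (x, y) * ln (rho \<delta> m (x, y)) \<le> rho \<delta> m (x, y) * L \<delta> m x"
proof (cases "\<exists>\<kappa>\<in>J \<delta> m. x \<in> cube \<delta> \<kappa>")
  case True
  then obtain \<kappa>0 where k: "\<kappa>0 \<in> J \<delta> m" "x \<in> cube \<delta> \<kappa>0" by blast
  have r: "rho \<delta> m (x, y) = hr \<delta> \<kappa>0 y / w \<delta> \<kappa>0"
    unfolding rho_def using sum_single_cube[OF k, of "\<lambda>\<kappa>. hr \<delta> \<kappa> y / w \<delta> \<kappa>"]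
    by (simp add: times_divide_eq_right)
  have l: "L \<delta> m x = ln (1 / w \<delta> \<kappa>0)"
    unfolding L_def using sum_single_cube[OF k, of "\<lambda>\<kappa>. ln (1 / w \<delta> \<kappa>)"] by simp
  have wp: "0 < w \<delta> \<kappa>0" using w_pos[OF k(1)] .
  have "hr \<delta> \<kappa>0 y / w \<delta> \<kappa>0 \<le> 1 / w \<delta> \<kappa>0"
    using h k(1) wp by (intro divide_right_mono) auto
  then show ?thesis unfolding r l using wp hr_nonneg[of \<delta> \<kappa>0 y]
    by (intro xlnx_bound) auto
next
  case False
  then have "rho \<delta> m (x, y) = 0" unfolding rho_def by (intro sum.neutral) auto
  then show ?thesis by simp
qed

lemma AE_hr_pair: "AE z in \<mu> \<Otimes>\<^sub>M \<nu>. \<forall>\<kappa>\<in>J \<delta> m. hr \<delta> \<kappa> (snd z) \<le> 1"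
proof -
  have "AE y in \<nu>. \<forall>\<kappa>\<in>J \<delta> m. hr \<delta> \<kappa> y \<le> 1"
    using finite_J by (intro AE_finite_allI) (use hk_hr in \<open>auto elim: AE_mp\<close>)
  note ae = this
  interpret PS: pair_sigma_finite \<mu> \<nu> by (simp add: pair_sigma_finite_def sf_mu sf_nu)
  show ?thesis
  proof (rule PS.AE_pair_measure)
    show "{x \<in> space (\<mu> \<Otimes>\<^sub>M \<nu>). \<forall>\<kappa>\<in>J \<delta> m. hr \<delta> \<kappa> (snd x) \<le> 1} \<in> sets (\<mu> \<Otimes>\<^sub>M \<nu>)"
    proof -
      have S: "{y. \<forall>\<kappa>\<in>J \<delta> m. hr \<delta> \<kappa> y \<le> 1} \<in> sets borel" using finite_J by measurable
      have "{x \<in> space (\<mu> \<Otimes>\<^sub>M \<nu>). \<forall>\<kappa>\<in>J \<delta> m. hr \<delta> \<kappa> (snd x) \<le> 1} = space \<mu> \<times> {y. \<forall>\<kappa>\<in>J \<delta> m. hr \<delta> \<kappa> y \<le> 1}"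
        by (auto simp: space_pair_measure space_mu space_nu)
      then show ?thesis using S by (simp add: pair_measureI sets_nu)
    qed
    show "AE x in \<mu>. AE y in \<nu>. \<forall>\<kappa>\<in>J \<delta> m. hr \<delta> \<kappa> (snd (x, y)) \<le> 1"
      using ae by simp
  qed
qed


lemma sf_pair: "sigma_finite_measure (\<mu> \<Otimes>\<^sub>M \<nu>)"
  using prob_pair by (simp add: prob_space_def finite_measure_def)

lemma ereal_minus_enn_le: "a - enn2ereal b \<le> (a::ereal)"
  using enn2ereal_nonneg[of b] by (cases a; cases "enn2ereal b") auto

context
  fixes \<delta> :: real and m :: int
  assumes \<delta>: "\<delta> > 0" and Km: "\<forall>x\<in>K. norm x \<le> m * \<delta>"
begin

lemma ent_pi: "rel_ent (pi \<delta> m) (\<mu> \<Otimes>\<^sub>M \<nu>) \<le> ereal (ln (card (J \<delta> m)))"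
proof -
  let ?q = "\<mu> \<Otimes>\<^sub>M \<nu>"
  have ex: "\<exists>\<rho>\<in>borel_measurable ?q. (\<forall>x. 0 \<le> \<rho> x) \<and> pi \<delta> m = density ?q (\<lambda>x. ennreal (\<rho> x))"
    by (intro bexI[of _ "rho \<delta> m"]) (auto simp: rho_nonneg pi_def intro: meas_pair_mn)
  define \<rho>' where "\<rho>' = (SOME \<rho>. \<rho> \<in> borel_measurable ?q \<and> (\<forall>x. 0 \<le> \<rho> x) \<and> pi \<delta> m = density ?q (\<lambda>x. ennreal (\<rho> x)))"
  have \<rho>': "\<rho>' \<in> borel_measurable ?q" "\<forall>x. 0 \<le> \<rho>' x" "pi \<delta> m = density ?q (\<lambda>x. ennreal (\<rho>' x))"
    using someI_ex[OF ex[unfolded Bex_def]] unfolding \<rho>'_def by auto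
  note [measurable] = \<rho>'(1)
  have rm[measurable]: "rho \<delta> m \<in> borel_measurable ?q" by (intro meas_pair_mn) simp
  have eq: "rel_ent (pi \<delta> m) ?q = enn2ereal (\<integral>\<^sup>+ x. ennreal (\<rho>' x * ln (\<rho>' x)) \<partial>?q)
           - enn2ereal (\<integral>\<^sup>+ x. ennreal (- (\<rho>' x * ln (\<rho>' x))) \<partial>?q)"
    unfolding rel_ent_def Let_def \<rho>'_def[symmetric] by (rule if_P[OF ex])
  have ae: "AE z in ?q. \<rho>' z = rho \<delta> m z"
  proof -
    have "density ?q (\<lambda>z. ennreal (\<rho>' z)) = density ?q (\<lambda>z. ennreal (rho \<delta> m z))"
      using \<rho>'(3) by (simp add: pi_def)
    then have "AE z in ?q. ennreal (\<rho>' z) = ennreal (rho \<delta> m z)"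
      by (subst (asm) sigma_finite_measure.density_unique_iff[OF sf_pair]) auto
    then show ?thesis
      by eventually_elim (use \<rho>'(2) rho_nonneg in auto)
  qed
  define S where "S = (\<Sum>\<kappa>\<in>J \<delta> m. w \<delta> \<kappa> * ln (1 / w \<delta> \<kappa>))"
  have S_nonneg: "0 \<le> S" unfolding S_def
  proof (intro sum_nonneg mult_nonneg_nonneg)
    fix \<kappa> assume k: "\<kappa> \<in> J \<delta> m"
    show "0 \<le> ln (1 / w \<delta> \<kappa>)" using w_pos[OF k] w_le1[of \<delta> \<kappa>] by (intro ln_ge_zero) simp
  qed (simp add: w_def)
  have "(\<integral>\<^sup>+ x. ennreal (\<rho>' x * ln (\<rho>' x)) \<partial>?q) = (\<integral>\<^sup>+ z. ennreal (rho \<delta> m z * ln (rho \<delta> m z)) \<partial>?q)"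
    by (rule nn_integral_cong_AE) (use ae in \<open>eventually_elim, simp\<close>)
  also have "\<dots> \<le> (\<integral>\<^sup>+ z. ennreal (rho \<delta> m z) * ennreal (L \<delta> m (fst z)) \<partial>?q)"
  proof (rule nn_integral_mono_AE)
    show "AE z in ?q. ennreal (rho \<delta> m z * ln (rho \<delta> m z)) \<le> ennreal (rho \<delta> m z) * ennreal (L \<delta> m (fst z))"
      using AE_hr_pair[of \<delta> m]
    proof eventually_elim
      case (elim z)
      obtain x y where z: "z = (x, y)" by (cases z)
      have "rho \<delta> m z * ln (rho \<delta> m z) \<le> rho \<delta> m z * L \<delta> m (fst z)"
        using rho_ln_bound[of \<delta> m y x] elim z by simp
      then have "ennreal (rho \<delta> m z * ln (rho \<delta> m z)) \<le> ennreal (rho \<delta> m z * L \<delta> m (fst z))"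
        by (rule ennreal_leI)
      also have "\<dots> = ennreal (rho \<delta> m z) * ennreal (L \<delta> m (fst z))"
        using rho_nonneg L_nonneg by (simp add: ennreal_mult)
      finally show ?case .
    qed
  qed
  also have "\<dots> = (\<integral>\<^sup>+ z. ennreal (L \<delta> m (fst z)) \<partial>pi \<delta> m)"
    unfolding pi_def by (rule nn_integral_density[symmetric]) (auto intro!: meas_pair_mn)
  also have "\<dots> = (\<integral>\<^sup>+ x. ennreal (L \<delta> m x) \<partial>distr (pi \<delta> m) \<mu> fst)"
    by (rule nn_integral_distr[symmetric]) (use fst_pi[of \<delta> m] in \<open>auto simp: measurable_cong_sets[OF refl sets_mu]\<close>)
  also have "\<dots> = (\<integral>\<^sup>+ x. ennreal (L \<delta> m x) \<partial>\<mu>)" by (simp add: pi_fst[OF \<delta> Km])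
  also have "\<dots> = (\<Sum>\<kappa>\<in>J \<delta> m. \<integral>\<^sup>+ x. indicator (cube \<delta> \<kappa>) x * ennreal (L \<delta> m x) \<partial>\<mu>)"
    by (rule nn_partition[OF \<delta> Km, symmetric]) simp
  also have "\<dots> = (\<Sum>\<kappa>\<in>J \<delta> m. \<integral>\<^sup>+ x. indicator (cube \<delta> \<kappa>) x * ennreal (ln (1 / w \<delta> \<kappa>)) \<partial>\<mu>)"
  proof (intro sum.cong refl nn_integral_cong)
    fix \<kappa> x assume k: "\<kappa> \<in> J \<delta> m"
    show "indicator (cube \<delta> \<kappa>) x * ennreal (L \<delta> m x) = indicator (cube \<delta> \<kappa>) x * ennreal (ln (1 / w \<delta> \<kappa>))"
    proof (cases "x \<in> cube \<delta> \<kappa>")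
      case True
      then show ?thesis unfolding L_def using sum_single_cube[OF k True, of "\<lambda>\<kappa>. ln (1 / w \<delta> \<kappa>)"] by simp
    qed simp
  qed
  also have "\<dots> = (\<Sum>\<kappa>\<in>J \<delta> m. ennreal (w \<delta> \<kappa> * ln (1 / w \<delta> \<kappa>)))"
  proof (intro sum.cong refl)
    fix \<kappa> assume k: "\<kappa> \<in> J \<delta> m"
    have "0 \<le> ln (1 / w \<delta> \<kappa>)" using w_pos[OF k] w_le1[of \<delta> \<kappa>] by (intro ln_ge_zero) simp
    then show "(\<integral>\<^sup>+ x. indicator (cube \<delta> \<kappa>) x * ennreal (ln (1 / w \<delta> \<kappa>)) \<partial>\<mu>) = ennreal (w \<delta> \<kappa> * ln (1 / w \<delta> \<kappa>))"
      unfolding int_const_cube using w_pos[OF k] by (simp add: ennreal_mult[symmetric] mult.commute)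
  qed
  also have "\<dots> = ennreal S"
    unfolding S_def
  proof (rule sum_ennreal)
    fix \<kappa> assume k: "\<kappa> \<in> J \<delta> m"
    have "0 \<le> ln (1 / w \<delta> \<kappa>)" using w_pos[OF k] w_le1[of \<delta> \<kappa>] by (intro ln_ge_zero) simp
    then show "0 \<le> w \<delta> \<kappa> * ln (1 / w \<delta> \<kappa>)" using w_pos[OF k] by simp
  qed
  finally have I: "(\<integral>\<^sup>+ x. ennreal (\<rho>' x * ln (\<rho>' x)) \<partial>?q) \<le> ennreal S" .
  have "rel_ent (pi \<delta> m) ?q \<le> enn2ereal (\<integral>\<^sup>+ x. ennreal (\<rho>' x * ln (\<rho>' x)) \<partial>?q)"
    unfolding eq by (rule ereal_minus_enn_le)
  also have "\<dots> \<le> enn2ereal (ennreal S)" using I by (simp add: less_eq_ennreal.rep_eq)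
  also have "\<dots> = ereal S" using S_nonneg by (simp add: enn2ereal_ennreal)
  also have "S \<le> ln (card (J \<delta> m))"
    unfolding S_def using finite_J w_pos sum_w[OF \<delta> Km] by (intro entropy_le_ln_card) auto
  finally show ?thesis by simp
qed

end

end

context ot_setting
begin

lemma integrable_qc_mu: "integrable \<mu> (\<lambda>x. quad_cost (x, T x))"
proof -
  obtain B where B: "\<forall>z\<in>K \<times> T ` K. norm (quad_cost z) \<le> B" using qc_bound ..
  show ?thesis
    by (rule integrable_mu_bounded[of _ B]) (use B in \<open>auto simp: quad_cost_def\<close>)
qed

context
  fixes \<delta> :: real and m :: int
  assumes \<delta>: "\<delta> > 0" and Km: "\<forall>x\<in>K. norm x \<le> m * \<delta>"
begin

lemma cost_pi: "(\<integral>z. quad_cost z \<partial>pi \<delta> m) \<le> (\<integral>x. quad_cost (x, T x) \<partial>\<mu>) + M / 2 * (real DIM('a) * \<delta>\<^sup>2)"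
proof -
  have cp: "coupling \<mu> \<nu> (pi \<delta> m)" by (rule pi_coupling[OF \<delta> Km])
  have i1: "integrable (pi \<delta> m) quad_cost" by (rule integrable_qc[OF cp])
  have e1: "(\<integral>\<^sup>+ z. ennreal (quad_cost z) \<partial>pi \<delta> m) = ennreal (\<integral>z. quad_cost z \<partial>pi \<delta> m)"
    by (rule nn_integral_eq_integral[OF i1]) (simp add: quad_cost_def case_prod_beta)
  have e2: "(\<integral>\<^sup>+ x. ennreal (quad_cost (x, T x)) \<partial>\<mu>) = ennreal (\<integral>x. quad_cost (x, T x) \<partial>\<mu>)"
    by (rule nn_integral_eq_integral[OF integrable_qc_mu]) (simp add: quad_cost_def)
  have nn: "0 \<le> (\<integral>x. quad_cost (x, T x) \<partial>\<mu>)" by (rule integral_nonneg_AE) (simp add: quad_cost_def)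
  have nn2: "0 \<le> M / 2 * (real DIM('a) * \<delta>\<^sup>2)" using M_nonneg by simp
  have ep: "ennreal ((\<integral>x. quad_cost (x, T x) \<partial>\<mu>) + M / 2 * (real DIM('a) * \<delta>\<^sup>2))
      = ennreal (\<integral>x. quad_cost (x, T x) \<partial>\<mu>) + ennreal (M / 2 * (real DIM('a) * \<delta>\<^sup>2))"
    by (rule ennreal_plus[OF nn nn2])
  have "ennreal (\<integral>z. quad_cost z \<partial>pi \<delta> m) \<le> ennreal ((\<integral>x. quad_cost (x, T x) \<partial>\<mu>) + M / 2 * (real DIM('a) * \<delta>\<^sup>2))"
    using cost_nn[OF \<delta> Km] unfolding e1 e2 ep .
  then show ?thesis by (rule ennreal_le_iff[THEN iffD1, rotated]) (use nn nn2 in simp)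
qed

lemma main_bound:
  assumes opt: "optimal_entropic_plan \<mu> \<nu> \<epsilon> \<gamma>" and \<epsilon>: "\<epsilon> > 0"
  shows "(\<integral>(x, y). (norm (y - T x))\<^sup>2 \<partial>\<gamma>) \<le> 2 * M * (M / 2 * (real DIM('a) * \<delta>\<^sup>2) + \<epsilon> * ln (card (J \<delta> m)))"
proof -
  have cp: "coupling \<mu> \<nu> \<gamma>" using opt by (simp add: optimal_entropic_plan_def)
  have le: "entropic_functional \<mu> \<nu> \<epsilon> \<gamma> \<le> entropic_functional \<mu> \<nu> \<epsilon> (pi \<delta> m)"
    using opt pi_coupling[OF \<delta> Km] by (simp add: optimal_entropic_plan_def)
  have r0: "0 \<le> rel_ent \<gamma> (\<mu> \<Otimes>\<^sub>M \<nu>)" by (rule rel_ent_nonneg[OF prob_g[OF cp] prob_pair])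
  have "ereal (\<integral>z. quad_cost z \<partial>\<gamma>) \<le> ereal (\<integral>z. quad_cost z \<partial>\<gamma>) + ereal \<epsilon> * rel_ent \<gamma> (\<mu> \<Otimes>\<^sub>M \<nu>)"
  proof -
    have "0 \<le> ereal \<epsilon> * rel_ent \<gamma> (\<mu> \<Otimes>\<^sub>M \<nu>)" using r0 \<epsilon> by (cases "rel_ent \<gamma> (\<mu> \<Otimes>\<^sub>M \<nu>)") auto
    then show ?thesis by (simp add: add_increasing2)
  qed
  also have "\<dots> = entropic_functional \<mu> \<nu> \<epsilon> \<gamma>" by (simp add: entropic_functional_def)
  also note le
  also have "entropic_functional \<mu> \<nu> \<epsilon> (pi \<delta> m) \<le> ereal (\<integral>z. quad_cost z \<partial>pi \<delta> m) + ereal \<epsilon> * ereal (ln (card (J \<delta> m)))"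
    unfolding entropic_functional_def
    by (intro add_left_mono ereal_mult_left_mono ent_pi[OF \<delta> Km]) (use \<epsilon> in simp)
  also have "\<dots> = ereal ((\<integral>z. quad_cost z \<partial>pi \<delta> m) + \<epsilon> * ln (card (J \<delta> m)))" by simp
  finally have c1: "(\<integral>z. quad_cost z \<partial>\<gamma>) \<le> (\<integral>z. quad_cost z \<partial>pi \<delta> m) + \<epsilon> * ln (card (J \<delta> m))" by simp
  have "(\<integral>(x, y). (norm (y - T x))\<^sup>2 \<partial>\<gamma>) \<le> 2 * M * ((\<integral>z. quad_cost z \<partial>\<gamma>) - (\<integral>x. quad_cost (x, T x) \<partial>\<mu>))"
    by (rule coupling_bound[OF cp])
  also have "\<dots> \<le> 2 * M * (M / 2 * (real DIM('a) * \<delta>\<^sup>2) + \<epsilon> * ln (card (J \<delta> m)))"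
    using c1 cost_pi M_nonneg by (intro mult_left_mono) auto
  finally show ?thesis .
qed

end

end

lemma abs_prod_le: "\<bar>a::real\<bar> \<le> A \<Longrightarrow> \<bar>b\<bar> \<le> B' \<Longrightarrow> \<bar>a * b\<bar> \<le> A * B'"
  by (simp add: abs_mult mult_mono')

lemma condexp_sq_ineq:
  assumes sub: "sigma_finite_subalgebra M F" and fin: "finite_measure M"
    and Ym[measurable]: "Y \<in> borel_measurable M" and Yb: "AE x in M. \<bar>Y x\<bar> \<le> B"
    and Zm: "Z \<in> borel_measurable F" and Zb: "AE x in M. \<bar>Z x\<bar> \<le> B"
    and Gm: "G \<in> borel_measurable F" and GY: "AE x in M. real_cond_exp M F Y x = G x"
  shows "integrable M (\<lambda>x. (G x - Z x)\<^sup>2) \<and> (\<integral>x. (G x - Z x)\<^sup>2 \<partial>M) \<le> (\<integral>x. (Y x - Z x)\<^sup>2 \<partial>M)"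
proof -
  interpret sigma_finite_subalgebra M F by (rule sub)
  interpret finite_measure M by (rule fin)
  have Zm'[measurable]: "Z \<in> borel_measurable M" by (rule measurable_from_subalg[OF subalg Zm])
  have Gm'[measurable]: "G \<in> borel_measurable M" by (rule measurable_from_subalg[OF subalg Gm])
  have iY: "integrable M Y" by (rule integrable_const_bound[of _ B]) (use Yb in auto)
  have "AE x in M. real_cond_exp M F Y x \<le> B" by (rule real_cond_exp_le_c[OF iY]) (use Yb in auto)
  moreover have "AE x in M. real_cond_exp M F Y x \<ge> -B" by (rule real_cond_exp_ge_c[OF iY]) (use Yb in auto)
  ultimately have Gb: "AE x in M. \<bar>G x\<bar> \<le> B" using GY by eventually_elim auto
  have B: "AE x in M. \<bar>Y x\<bar> \<le> B \<and> \<bar>Z x\<bar> \<le> B \<and> \<bar>G x\<bar> \<le> B" using Yb Zb Gb by eventually_elim auto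
  have bd: "\<bar>(a - b) * (c - d)\<bar> \<le> (B + B) * (B + B)" if "\<bar>a\<bar> \<le> B" "\<bar>b\<bar> \<le> B" "\<bar>c\<bar> \<le> B" "\<bar>d\<bar> \<le> B" for a b c d :: real
    by (rule abs_prod_le) (use that in auto)
  have bd2: "\<bar>(a - b) * c\<bar> \<le> (B + B) * B" if "\<bar>a\<bar> \<le> B" "\<bar>b\<bar> \<le> B" "\<bar>c\<bar> \<le> B" for a b c :: real
    by (rule abs_prod_le) (use that in auto)
  have sq: "(t::real)\<^sup>2 = t * t" for t by (simp add: power2_eq_square)
  have i1: "integrable M (\<lambda>x. (G x - Z x)\<^sup>2)"
    by (rule integrable_const_bound[of _ "(B + B) * (B + B)"]) (use B in \<open>eventually_elim, simp only: real_norm_def sq, intro bd, auto\<close>)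
  have i2: "integrable M (\<lambda>x. (Y x - G x)\<^sup>2)"
    by (rule integrable_const_bound[of _ "(B + B) * (B + B)"]) (use B in \<open>eventually_elim, simp only: real_norm_def sq, intro bd, auto\<close>)
  have i3: "integrable M (\<lambda>x. (G x - Z x) * Y x)"
    by (rule integrable_const_bound[of _ "(B + B) * B"]) (use B in \<open>eventually_elim, simp only: real_norm_def, intro bd2, auto\<close>)
  have i4: "integrable M (\<lambda>x. (G x - Z x) * G x)"
    by (rule integrable_const_bound[of _ "(B + B) * B"]) (use B in \<open>eventually_elim, simp only: real_norm_def, intro bd2, auto\<close>)
  have "(\<integral>x. (G x - Z x) * real_cond_exp M F Y x \<partial>M) = (\<integral>x. (G x - Z x) * Y x \<partial>M)"
    by (rule real_cond_exp_intg(2)[OF i3]) (use Gm Zm in auto)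
  moreover have "(\<integral>x. (G x - Z x) * real_cond_exp M F Y x \<partial>M) = (\<integral>x. (G x - Z x) * G x \<partial>M)"
    by (rule integral_cong_AE) (use GY in auto)
  ultimately have cross: "(\<integral>x. (G x - Z x) * Y x \<partial>M) - (\<integral>x. (G x - Z x) * G x \<partial>M) = 0" by simp
  have "(\<integral>x. (Y x - Z x)\<^sup>2 \<partial>M) = (\<integral>x. (G x - Z x)\<^sup>2 + (Y x - G x)\<^sup>2 + 2 * ((G x - Z x) * Y x - (G x - Z x) * G x) \<partial>M)"
    by (rule Bochner_Integration.integral_cong) (auto simp: power2_eq_square algebra_simps)
  also have "\<dots> = (\<integral>x. (G x - Z x)\<^sup>2 \<partial>M) + (\<integral>x. (Y x - G x)\<^sup>2 \<partial>M)
      + 2 * ((\<integral>x. (G x - Z x) * Y x \<partial>M) - (\<integral>x. (G x - Z x) * G x \<partial>M))"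
    using i1 i2 i3 i4 by simp
  also have "\<dots> = (\<integral>x. (G x - Z x)\<^sup>2 \<partial>M) + (\<integral>x. (Y x - G x)\<^sup>2 \<partial>M)" using cross by simp
  also have "\<dots> \<ge> (\<integral>x. (G x - Z x)\<^sup>2 \<partial>M)" by (simp add: integral_nonneg_AE)
  finally show ?thesis using i1 by simp
qed

lemma norm_sq_sum: "(norm (v::'a::euclidean_space))\<^sup>2 = (\<Sum>i\<in>Basis. (v \<bullet> i)\<^sup>2)"
  by (subst power2_norm_eq_inner, subst euclidean_inner) (simp add: power2_eq_square)

context ot_setting
begin

lemma bary_bound:
  assumes cp: "coupling \<mu> \<nu> \<gamma>" and bp: "barycentric_projection \<gamma> \<mu> Tb"
  shows "(\<integral>x. (norm (Tb x - T x))\<^sup>2 \<partial>\<mu>) \<le> (\<integral>(x, y). (norm (y - T x))\<^sup>2 \<partial>\<gamma>)"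
proof -
  have gm: "\<And>h::'a \<times> 'a \<Rightarrow> real. h \<in> borel_measurable (borel \<Otimes>\<^sub>M borel) \<Longrightarrow> h \<in> borel_measurable \<gamma>"
    by (simp add: measurable_cong_sets[OF sets_g[OF cp] refl])
  have gmv: "\<And>h::'a \<times> 'a \<Rightarrow> 'a. h \<in> borel_measurable (borel \<Otimes>\<^sub>M borel) \<Longrightarrow> h \<in> borel_measurable \<gamma>"
    by (simp add: measurable_cong_sets[OF sets_g[OF cp] refl])
  have Tbm[measurable]: "Tb \<in> borel_measurable borel"
    using bp by (simp add: barycentric_projection_def measurable_cong_sets[OF sets_mu refl])
  have iTb: "integrable \<mu> Tb" using bp by (simp add: barycentric_projection_def)
  have bpe: "\<And>A. A \<in> sets \<mu> \<Longrightarrow> (\<integral>(x, y). indicator A x *\<^sub>R y \<partial>\<gamma>) = (\<integral>x. indicator A x *\<^sub>R Tb x \<partial>\<mu>)"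
    using bp by (simp add: barycentric_projection_def)
  obtain R where R: "\<forall>y\<in>T ` K. norm y \<le> R" and R0: "0 < R"
    using compact_imp_bounded[OF TK] by (auto simp: bounded_pos)
  have fing: "finite_measure \<gamma>" by (rule fin_g[OF cp])
  define F where "F = vimage_algebra (space \<gamma>) fst \<mu>"
  have fstF: "fst \<in> space \<gamma> \<rightarrow> space \<mu>" using measurable_space[OF fst_meas_g[OF cp]] by auto
  have sF: "sets F = {fst -` A \<inter> space \<gamma> | A. A \<in> sets \<mu>}"
    unfolding F_def by (rule sets_vimage_algebra2[OF fstF])
  have subalg: "subalgebra \<gamma> F"
    unfolding subalgebra_def using measurable_sets[OF fst_meas_g[OF cp]]
    by (auto simp: F_def sF[unfolded F_def])
  have sfs: "sigma_finite_subalgebra \<gamma> F"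
    by (rule finite_measure_subalgebra_is_sigma_finite)
       (simp add: finite_measure_subalgebra_def finite_measure_subalgebra_axioms_def fing subalg)
  interpret sigma_finite_subalgebra \<gamma> F by (rule sfs)
  have fstm: "fst \<in> measurable F \<mu>" unfolding F_def by (rule measurable_vimage_algebra1[OF fstF])
  have AEg: "AE z in \<gamma>. fst z \<in> K \<and> snd z \<in> T ` K" by (rule AE_g[OF cp])
  have coord: "integrable \<gamma> (\<lambda>z. (Tb (fst z) \<bullet> i - T (fst z) \<bullet> i)\<^sup>2) \<and>
      (\<integral>z. (Tb (fst z) \<bullet> i - T (fst z) \<bullet> i)\<^sup>2 \<partial>\<gamma>) \<le> (\<integral>z. (snd z \<bullet> i - T (fst z) \<bullet> i)\<^sup>2 \<partial>\<gamma>)"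
    if i: "i \<in> Basis" for i
  proof (rule condexp_sq_ineq[OF sfs fing])
    show "(\<lambda>z. snd z \<bullet> i) \<in> borel_measurable \<gamma>" by (rule gm) measurable
    show "AE z in \<gamma>. \<bar>snd z \<bullet> i\<bar> \<le> R"
      using AEg by eventually_elim (use R i in \<open>auto intro: order_trans[OF Basis_le_norm]\<close>)
    show "(\<lambda>z. T (fst z) \<bullet> i) \<in> borel_measurable F"
      by (rule measurable_compose[OF fstm]) (simp add: measurable_cong_sets[OF sets_mu refl])
    show "AE z in \<gamma>. \<bar>T (fst z) \<bullet> i\<bar> \<le> R"
      using AEg by eventually_elim (use R i in \<open>auto intro: order_trans[OF Basis_le_norm]\<close>)
    show Gm: "(\<lambda>z. Tb (fst z) \<bullet> i) \<in> borel_measurable F"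
      by (rule measurable_compose[OF fstm]) (simp add: measurable_cong_sets[OF sets_mu refl])
    show "AE z in \<gamma>. real_cond_exp \<gamma> F (\<lambda>z. snd z \<bullet> i) z = Tb (fst z) \<bullet> i"
    proof (rule real_cond_exp_charact)
      show iY: "integrable \<gamma> (\<lambda>z. snd z \<bullet> i)"
        by (rule finite_measure.integrable_const_bound[OF fing, of _ R])
           (use AEg in \<open>eventually_elim, use R i in \<open>auto intro: order_trans[OF Basis_le_norm]\<close>\<close>, rule gm, measurable)
      have "integrable (distr \<gamma> \<mu> fst) (\<lambda>x. Tb x \<bullet> i)" using distr_fst[OF cp] iTb by simp
      then show iG: "integrable \<gamma> (\<lambda>z. Tb (fst z) \<bullet> i)"
        by (subst (asm) integrable_distr_eq) (auto simp: measurable_cong_sets[OF sets_mu refl] fst_meas_g[OF cp])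
      show "(\<lambda>z. Tb (fst z) \<bullet> i) \<in> borel_measurable F" by (rule Gm)
      fix A assume "A \<in> sets F"
      then obtain B where B: "B \<in> sets \<mu>" "A = fst -` B \<inter> space \<gamma>" using sF by auto
      have Bb[measurable]: "B \<in> sets borel" using B(1) by (simp add: sets_mu)
      have ib: "integrable \<gamma> (\<lambda>z. indicator B (fst z) *\<^sub>R snd z)"
      proof (rule finite_measure.integrable_const_bound[OF fing, of _ R])
        show "AE z in \<gamma>. norm (indicator B (fst z) *\<^sub>R snd z) \<le> R"
          using AEg by eventually_elim (use R R0 in \<open>auto simp: indicator_def\<close>)
        show "(\<lambda>z. indicator B (fst z) *\<^sub>R snd z) \<in> borel_measurable \<gamma>" by (rule gmv) measurable
      qed
      have "(\<integral>z \<in> A. snd z \<bullet> i \<partial>\<gamma>) = (\<integral>z. (indicator B (fst z) *\<^sub>R snd z) \<bullet> i \<partial>\<gamma>)"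
        unfolding set_lebesgue_integral_def B(2)
        by (rule Bochner_Integration.integral_cong) (auto simp: indicator_def)
      also have "\<dots> = (\<integral>z. indicator B (fst z) *\<^sub>R snd z \<partial>\<gamma>) \<bullet> i"
        by (rule integral_inner_left) (rule ib)
      also have "(\<integral>z. indicator B (fst z) *\<^sub>R snd z \<partial>\<gamma>) = (\<integral>(x, y). indicator B x *\<^sub>R y \<partial>\<gamma>)"
        by (simp add: case_prod_beta')
      also have "\<dots> = (\<integral>x. indicator B x *\<^sub>R Tb x \<partial>\<mu>)" by (rule bpe[OF B(1)])
      also have "\<dots> \<bullet> i = (\<integral>x. (indicator B x *\<^sub>R Tb x) \<bullet> i \<partial>\<mu>)"
        by (rule integral_inner_left[symmetric]) (rule integrable_mult_indicator[OF B(1) iTb])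
      also have "\<dots> = (\<integral>x. (indicator B x *\<^sub>R Tb x) \<bullet> i \<partial>distr \<gamma> \<mu> fst)" by (simp add: distr_fst[OF cp])
      also have "\<dots> = (\<integral>z. (indicator B (fst z) *\<^sub>R Tb (fst z)) \<bullet> i \<partial>\<gamma>)"
        by (rule integral_distr) (auto simp: measurable_cong_sets[OF sets_mu refl] fst_meas_g[OF cp])
      also have "\<dots> = (\<integral>z \<in> A. Tb (fst z) \<bullet> i \<partial>\<gamma>)"
        unfolding set_lebesgue_integral_def B(2)
        by (rule Bochner_Integration.integral_cong) (auto simp: indicator_def)
      finally show "(\<integral>z \<in> A. snd z \<bullet> i \<partial>\<gamma>) = (\<integral>z \<in> A. Tb (fst z) \<bullet> i \<partial>\<gamma>)" .
    qed
  qed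
  have iR: "integrable \<gamma> (\<lambda>z. (snd z \<bullet> i - T (fst z) \<bullet> i)\<^sup>2)" for i
  proof -
    have cont: "continuous_on (K \<times> T ` K) (\<lambda>z. (snd z \<bullet> i - T (fst z) \<bullet> i)\<^sup>2)"
      by (auto intro!: continuous_intros continuous_on_compose2[OF cont_T])
    obtain Bs where Bs: "\<forall>z\<in>K \<times> T ` K. norm ((snd z \<bullet> i - T (fst z) \<bullet> i)\<^sup>2) \<le> Bs"
      using cont_bound[OF compact_Times[OF K TK] cont] by blast
    show ?thesis by (rule integrable_g_bounded[OF cp _ Bs]) measurable
  qed
  have "(\<integral>x. (norm (Tb x - T x))\<^sup>2 \<partial>\<mu>) = (\<integral>x. (norm (Tb x - T x))\<^sup>2 \<partial>distr \<gamma> \<mu> fst)"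
    by (simp add: distr_fst[OF cp])
  also have "\<dots> = (\<integral>z. (norm (Tb (fst z) - T (fst z)))\<^sup>2 \<partial>\<gamma>)"
    by (rule integral_distr) (auto simp: measurable_cong_sets[OF sets_mu refl] fst_meas_g[OF cp])
  also have "\<dots> = (\<integral>z. (\<Sum>i\<in>Basis. (Tb (fst z) \<bullet> i - T (fst z) \<bullet> i)\<^sup>2) \<partial>\<gamma>)"
    by (simp add: norm_sq_sum inner_diff_left)
  also have "\<dots> = (\<Sum>i\<in>Basis. \<integral>z. (Tb (fst z) \<bullet> i - T (fst z) \<bullet> i)\<^sup>2 \<partial>\<gamma>)"
    by (subst Bochner_Integration.integral_sum) (use coord in auto)
  also have "\<dots> \<le> (\<Sum>i\<in>Basis. \<integral>z. (snd z \<bullet> i - T (fst z) \<bullet> i)\<^sup>2 \<partial>\<gamma>)"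
    by (rule sum_mono) (use coord in auto)
  also have "\<dots> = (\<integral>z. (\<Sum>i\<in>Basis. (snd z \<bullet> i - T (fst z) \<bullet> i)\<^sup>2) \<partial>\<gamma>)"
    by (subst Bochner_Integration.integral_sum) (use iR in auto)
  also have "\<dots> = (\<integral>(x, y). (norm (y - T x))\<^sup>2 \<partial>\<gamma>)"
    by (simp add: norm_sq_sum inner_diff_left case_prod_beta')
  finally show ?thesis .
qed

end

lemma log_bound:
  fixes R \<epsilon> :: real and d :: nat and N :: nat and m :: int
  assumes R: "0 < R" and e: "0 < \<epsilon>" "\<epsilon> < 1" and m: "m = \<lceil>R / sqrt \<epsilon>\<rceil>"
    and N: "0 < N" "N \<le> nat (2 * m + 1) ^ d"
  shows "ln (real N) \<le> real d * (ln (2 * R + 3) + ln (1 / \<epsilon>) / 2)"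
proof -
  define \<delta> where "\<delta> = sqrt \<epsilon>"
  have d0: "0 < \<delta>" "\<delta> \<le> 1" using e by (auto simp: \<delta>_def real_sqrt_le_1_iff)
  have m1: "real_of_int m < R / \<delta> + 1" unfolding m \<delta>_def[symmetric] by linarith
  have p: "0 < R / sqrt \<epsilon>" using R e by simp
  have m0: "0 \<le> m" unfolding m using p by simp
  have "real_of_int (2 * m + 1) \<le> 2 * R / \<delta> + 3" using m1 by simp
  also have "\<dots> \<le> (2 * R + 3) / \<delta>"
  proof -
    have "3 \<le> 3 / \<delta>" using d0 by (simp add: field_simps)
    then show ?thesis by (simp add: add_divide_distrib)
  qed
  finally have b: "real_of_int (2 * m + 1) \<le> (2 * R + 3) / \<delta>" .
  have "real N \<le> real (nat (2 * m + 1) ^ d)" using N by linarith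
  also have "\<dots> = (real_of_int (2 * m + 1)) ^ d" using m0 by simp
  finally have "ln (real N) \<le> ln ((real_of_int (2 * m + 1)) ^ d)" using N by (intro ln_mono) auto
  also have "\<dots> = real d * ln (real_of_int (2 * m + 1))" using m0 by (simp add: ln_realpow)
  also have "\<dots> \<le> real d * ln ((2 * R + 3) / \<delta>)"
    using b m0 by (intro mult_left_mono ln_mono) auto
  also have "ln ((2 * R + 3) / \<delta>) = ln (2 * R + 3) + ln (1 / \<epsilon>) / 2"
    using d0 R e by (simp add: ln_div \<delta>_def ln_sqrt)
  finally show ?thesis .
qed

theorem proposition4p5:
  fixes \<mu>m \<mu>p :: "'a::euclidean_space measure"
    and f :: "'a \<Rightarrow> real" and T :: "'a \<Rightarrow> 'a" and M :: real
    and \<gamma> :: "real \<Rightarrow> ('a \<times> 'a) measure" and Tb :: "real \<Rightarrow> 'a \<Rightarrow> 'a"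
  assumes "compactly_supported_prob \<mu>m" and "compactly_supported_prob \<mu>p"
    and "convex_on UNIV f"
    and "\<And>x. (f has_derivative (\<lambda>h. T x \<bullet> h)) (at x)"
    and "M-lipschitz_on UNIV T"
    and "optimal_plan \<mu>m \<mu>p (distr \<mu>m (\<mu>m \<Otimes>\<^sub>M \<mu>p) (\<lambda>x. (x, T x)))"
    and "\<And>\<epsilon>. \<epsilon> > 0 \<Longrightarrow> optimal_entropic_plan \<mu>m \<mu>p \<epsilon> (\<gamma> \<epsilon>)"
    and "\<And>\<epsilon>. \<epsilon> > 0 \<Longrightarrow> barycentric_projection (\<gamma> \<epsilon>) \<mu>m (Tb \<epsilon>)"
  shows "(\<exists>C \<epsilon>0. \<epsilon>0 > 0 \<and> (\<forall>\<epsilon>. 0 < \<epsilon> \<and> \<epsilon> < \<epsilon>0 \<longrightarrow>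
            (\<integral> (x, y). (norm (y - T x))\<^sup>2 \<partial>(\<gamma> \<epsilon>))
              \<le> M * (real DIM('a) * \<epsilon> * ln (1 / \<epsilon>) + C * \<epsilon>)))
       \<and> (\<exists>C \<epsilon>0. \<epsilon>0 > 0 \<and> (\<forall>\<epsilon>. 0 < \<epsilon> \<and> \<epsilon> < \<epsilon>0 \<longrightarrow>
            (\<integral> x. (norm (Tb \<epsilon> x - T x))\<^sup>2 \<partial>\<mu>m)
              \<le> M * (real DIM('a) * \<epsilon> * ln (1 / \<epsilon>) + C * \<epsilon>)))"
proof -
  from assms(1) obtain K where smu: "sets \<mu>m = sets borel" and pmu: "prob_space \<mu>m"
    and K: "compact K" and AEK: "AE x in \<mu>m. x \<in> K"
    unfolding compactly_supported_prob_def by blast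
  from assms(2) have snu: "sets \<mu>p = sets borel" and pnu: "prob_space \<mu>p"
    unfolding compactly_supported_prob_def by blast+
  have Tm: "T \<in> measurable \<mu>m \<mu>p"
    using lipschitz_on_continuous_on[OF assms(5)]
    by (simp add: measurable_cong_sets[OF smu snu] borel_measurable_continuous_onI)
  have pm: "(\<lambda>x. (x, T x)) \<in> measurable \<mu>m (\<mu>m \<Otimes>\<^sub>M \<mu>p)"
    by (rule measurable_Pair[OF measurable_ident_sets[OF refl] Tm])
  have "distr (distr \<mu>m (\<mu>m \<Otimes>\<^sub>M \<mu>p) (\<lambda>x. (x, T x))) \<mu>p snd = \<mu>p"
    using assms(6) by (simp add: optimal_plan_def coupling_def)
  then have nu_eq: "\<mu>p = distr \<mu>m \<mu>p T"
    by (subst (asm) distr_distr[OF measurable_snd pm]) (simp add: o_def)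
  interpret ot_setting \<mu>m \<mu>p f T M K
    by (rule ot_setting.intro[OF smu snu pmu pnu K AEK assms(3) assms(4) assms(5) nu_eq])
  obtain R where R0: "0 < R" and R: "\<forall>x\<in>K. norm x \<le> R"
    using compact_imp_bounded[OF K] by (auto simp: bounded_pos)
  define C where "C = M * real DIM('a) + 2 * real DIM('a) * ln (2 * R + 3)"
  have main: "(\<integral> (x, y). (norm (y - T x))\<^sup>2 \<partial>(\<gamma> \<epsilon>)) \<le> M * (real DIM('a) * \<epsilon> * ln (1 / \<epsilon>) + C * \<epsilon>)"
    if e: "0 < \<epsilon>" "\<epsilon> < 1" for \<epsilon>
  proof -
    define \<delta> where "\<delta> = sqrt \<epsilon>"
    define m where "m = \<lceil>R / \<delta>\<rceil>"
    have d0: "0 < \<delta>" using e by (simp add: \<delta>_def)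
    have Km: "\<forall>x\<in>K. norm x \<le> m * \<delta>"
    proof
      fix x assume "x \<in> K"
      then have "norm x \<le> R" using R by simp
      also have "R = (R / \<delta>) * \<delta>" using d0 by simp
      also have "\<dots> \<le> m * \<delta>" unfolding m_def using d0 by (intro mult_right_mono) auto
      finally show "norm x \<le> m * \<delta>" .
    qed
    have mb: "(\<integral> (x, y). (norm (y - T x))\<^sup>2 \<partial>(\<gamma> \<epsilon>)) \<le> 2 * M * (M / 2 * (real DIM('a) * \<delta>\<^sup>2) + \<epsilon> * ln (card (J \<delta> m)))"
      by (rule main_bound[OF d0 Km assms(7)[OF e(1)] e(1)])
    have d2: "\<delta>\<^sup>2 = \<epsilon>" using e by (simp add: \<delta>_def)
    have cJ: "0 < card (J \<delta> m)" using finite_J J_nonempty[OF d0 Km] by (simp add: card_gt_0_iff)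
    have cJ2: "card (J \<delta> m) \<le> nat (2 * m + 1) ^ DIM('a)"
      using card_mono[OF finite_Idx J_sub[of \<delta> m]] card_Idx[where 'a='a and m=m] by simp
    have lb: "ln (real (card (J \<delta> m))) \<le> real DIM('a) * (ln (2 * R + 3) + ln (1 / \<epsilon>) / 2)"
      by (rule log_bound[OF R0 e _ cJ cJ2]) (simp add: m_def \<delta>_def)
    have "2 * M * (M / 2 * (real DIM('a) * \<delta>\<^sup>2) + \<epsilon> * ln (card (J \<delta> m)))
        \<le> 2 * M * (M / 2 * (real DIM('a) * \<epsilon>) + \<epsilon> * (real DIM('a) * (ln (2 * R + 3) + ln (1 / \<epsilon>) / 2)))"
      using lb e M_nonneg d2 by (intro mult_left_mono add_left_mono) auto
    also have "\<dots> = M * (real DIM('a) * \<epsilon> * ln (1 / \<epsilon>) + C * \<epsilon>)"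
      by (simp add: C_def algebra_simps)
    finally show ?thesis using mb by simp
  qed
  have second: "(\<integral> x. (norm (Tb \<epsilon> x - T x))\<^sup>2 \<partial>\<mu>m) \<le> M * (real DIM('a) * \<epsilon> * ln (1 / \<epsilon>) + C * \<epsilon>)"
    if e: "0 < \<epsilon>" "\<epsilon> < 1" for \<epsilon>
  proof -
    have cp: "coupling \<mu>m \<mu>p (\<gamma> \<epsilon>)" using assms(7)[of \<epsilon>] e by (simp add: optimal_entropic_plan_def)
    have "(\<integral> x. (norm (Tb \<epsilon> x - T x))\<^sup>2 \<partial>\<mu>m) \<le> (\<integral> (x, y). (norm (y - T x))\<^sup>2 \<partial>(\<gamma> \<epsilon>))"
      by (rule bary_bound[OF cp assms(8)]) (use e in simp)
    also have "\<dots> \<le> M * (real DIM('a) * \<epsilon> * ln (1 / \<epsilon>) + C * \<epsilon>)" using main e by blast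
    finally show ?thesis .
  qed
  show ?thesis
  proof (rule conjI)
    show "\<exists>C \<epsilon>0. \<epsilon>0 > 0 \<and> (\<forall>\<epsilon>. 0 < \<epsilon> \<and> \<epsilon> < \<epsilon>0 \<longrightarrow>
            (\<integral> (x, y). (norm (y - T x))\<^sup>2 \<partial>(\<gamma> \<epsilon>))
              \<le> M * (real DIM('a) * \<epsilon> * ln (1 / \<epsilon>) + C * \<epsilon>))"
      by (rule exI[of _ C], rule exI[of _ 1]) (use main in auto)
    show "\<exists>C \<epsilon>0. \<epsilon>0 > 0 \<and> (\<forall>\<epsilon>. 0 < \<epsilon> \<and> \<epsilon> < \<epsilon>0 \<longrightarrow>
            (\<integral> x. (norm (Tb \<epsilon> x - T x))\<^sup>2 \<partial>\<mu>m)
              \<le> M * (real DIM('a) * \<epsilon> * ln (1 / \<epsilon>) + C * \<epsilon>))"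
      by (rule exI[of _ C], rule exI[of _ 1]) (use second in auto)
  qed
qed

end
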